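(* Let $T$ be a countably infinite graph. Then every countably infinite, infinitely connected graph $H$ contains a spanning subgraph isomorphic to $T$ if and only if $T$ is a forest and either (i) some component of $T$ has unbounded radius, or (ii) $T$ has infinitely many components.
   Context: A graph $H$ is infinitely connected if it is infinite and $H-F$ is connected for every finite $F\subseteq V(H)$. A connected graph has radius at most $k$ if there is a vertex $u$ such that every vertex is joined to $u$ by a path of length at most $k$; it has unbounded radius if no such $k$ exists. A spanning subgraph of $H$ is a subgraph with vertex set $V(H)$. *)

theory Defs
  imports Main "HOL-Library.Countable_Set"
begin

definition graph :: "'a set \<Rightarrow> ('a \<Rightarrow> 'a \<Rightarrow> bool) \<Rightarrow> bool" where
  "graph V E \<longleftrightarrow> (\<forall>x y. E x y \<longrightarrow> x \<in> V \<and> y \<in> V \<and> x \<noteq> y \<and> E y x)"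

definition is_path :: "'a set \<Rightarrow> ('a \<Rightarrow> 'a \<Rightarrow> bool) \<Rightarrow> 'a list \<Rightarrow> bool" where
  "is_path V E xs \<longleftrightarrow> xs \<noteq> [] \<and> distinct xs \<and> set xs \<subseteq> V \<and>
     (\<forall>i. Suc i < length xs \<longrightarrow> E (xs ! i) (xs ! Suc i))"

definition joined :: "'a set \<Rightarrow> ('a \<Rightarrow> 'a \<Rightarrow> bool) \<Rightarrow> 'a \<Rightarrow> 'a \<Rightarrow> bool" where
  "joined V E u v \<longleftrightarrow> (\<exists>xs. is_path V E xs \<and> hd xs = u \<and> last xs = v)"

definition connected_graph :: "'a set \<Rightarrow> ('a \<Rightarrow> 'a \<Rightarrow> bool) \<Rightarrow> bool" where
  "connected_graph V E \<longleftrightarrow> V \<noteq> {} \<and> (\<forall>u\<in>V. \<forall>v\<in>V. joined V E u v)"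

definition induced :: "('a \<Rightarrow> 'a \<Rightarrow> bool) \<Rightarrow> 'a set \<Rightarrow> 'a \<Rightarrow> 'a \<Rightarrow> bool" where
  "induced E W = (\<lambda>x y. E x y \<and> x \<in> W \<and> y \<in> W)"

definition infinitely_connected :: "'a set \<Rightarrow> ('a \<Rightarrow> 'a \<Rightarrow> bool) \<Rightarrow> bool" where
  "infinitely_connected V E \<longleftrightarrow> infinite V \<and>
     (\<forall>F. finite F \<and> F \<subseteq> V \<longrightarrow> connected_graph (V - F) (induced E (V - F)))"

definition is_cycle :: "'a set \<Rightarrow> ('a \<Rightarrow> 'a \<Rightarrow> bool) \<Rightarrow> 'a list \<Rightarrow> bool" where
  "is_cycle V E xs \<longleftrightarrow> length xs \<ge> 3 \<and> is_path V E xs \<and> E (last xs) (hd xs)"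

definition forest :: "'a set \<Rightarrow> ('a \<Rightarrow> 'a \<Rightarrow> bool) \<Rightarrow> bool" where
  "forest V E \<longleftrightarrow> \<not> (\<exists>xs. is_cycle V E xs)"

definition component :: "'a set \<Rightarrow> ('a \<Rightarrow> 'a \<Rightarrow> bool) \<Rightarrow> 'a \<Rightarrow> 'a set" where
  "component V E v = {w \<in> V. joined V E v w}"

definition components :: "'a set \<Rightarrow> ('a \<Rightarrow> 'a \<Rightarrow> bool) \<Rightarrow> 'a set set" where
  "components V E = component V E ` V"

definition radius_le :: "'a set \<Rightarrow> ('a \<Rightarrow> 'a \<Rightarrow> bool) \<Rightarrow> nat \<Rightarrow> bool" where
  "radius_le V E k \<longleftrightarrow> (\<exists>u\<in>V. \<forall>w\<in>V. \<exists>xs. is_path V E xs \<and> hd xs = u \<and> last xs = w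
        \<and> length xs - 1 \<le> k)"

definition unbounded_radius :: "'a set \<Rightarrow> ('a \<Rightarrow> 'a \<Rightarrow> bool) \<Rightarrow> bool" where
  "unbounded_radius V E \<longleftrightarrow> (\<forall>k. \<not> radius_le V E k)"

definition has_spanning_copy ::
  "'b set \<Rightarrow> ('b \<Rightarrow> 'b \<Rightarrow> bool) \<Rightarrow> 'a set \<Rightarrow> ('a \<Rightarrow> 'a \<Rightarrow> bool) \<Rightarrow> bool" where
  "has_spanning_copy VH EH VT ET \<longleftrightarrow>
     (\<exists>f. bij_betw f VT VH \<and> (\<forall>x\<in>VT. \<forall>y\<in>VT. ET x y \<longrightarrow> EH (f x) (f y)))"

end

theory Submission
  imports Defs
begin

lemma is_path_conv:
  "is_path V E xs \<longleftrightarrow> xs \<noteq> [] \<and> distinct xs \<and> set xs \<subseteq> V \<and> successively E xs"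
  unfolding is_path_def successively_conv_nth by blast

lemma joined_refl: "u \<in> V \<Longrightarrow> joined V E u u"
  unfolding joined_def by (rule exI[of _ "[u]"]) (simp add: is_path_conv)

lemma joined_in: "joined V E u v \<Longrightarrow> u \<in> V \<and> v \<in> V"
  unfolding joined_def is_path_conv
  by (metis empty_iff hd_in_set last_in_set list.set(1) subsetD)

lemma joined_step:
  assumes "joined V E u v" "E v w" "w \<in> V"
  shows "joined V E u w"
proof -
  obtain xs where xs: "is_path V E xs" "hd xs = u" "last xs = v"
    using assms(1) unfolding joined_def by blast
  show ?thesis
  proof (cases "w \<in> set xs")
    case True
    then obtain i where i: "i < length xs" "xs ! i = w" by (metis in_set_conv_nth)
    let ?ys = "take (Suc i) xs"
    have "is_path V E ?ys"
      using xs(1) i unfolding is_path_def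
      by (auto dest: in_set_takeD)
    moreover have "hd ?ys = u" using xs i
      by (metis hd_take is_path_def zero_less_Suc)
    moreover have "last ?ys = w" using i
      by (simp add: take_Suc_conv_app_nth)
    ultimately show ?thesis unfolding joined_def by blast
  next
    case False
    have "is_path V E (xs @ [w])"
      using xs(1) False assms(2,3) unfolding is_path_conv
      by (auto simp: successively_append_iff xs(3))
    moreover have "hd (xs @ [w]) = u" using xs
      by (simp add: is_path_def)
    ultimately show ?thesis unfolding joined_def by (metis last_snoc)
  qed
qed

definition edgeV :: "'a set \<Rightarrow> ('a \<Rightarrow> 'a \<Rightarrow> bool) \<Rightarrow> 'a \<Rightarrow> 'a \<Rightarrow> bool" where
  "edgeV V E x y \<longleftrightarrow> E x y \<and> x \<in> V \<and> y \<in> V"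

lemma joined_rtranclp:
  "joined V E u w \<longleftrightarrow> u \<in> V \<and> (edgeV V E)\<^sup>*\<^sup>* u w"
proof
  assume "u \<in> V \<and> (edgeV V E)\<^sup>*\<^sup>* u w"
  then have "(edgeV V E)\<^sup>*\<^sup>* u w" "u \<in> V" by auto
  then show "joined V E u w"
    by (induction rule: rtranclp_induct) (auto intro: joined_refl joined_step simp: edgeV_def)
next
  assume "joined V E u w"
  then obtain xs where xs: "is_path V E xs" "hd xs = u" "last xs = w"
    unfolding joined_def by blast
  have "\<forall>u. xs \<noteq> [] \<longrightarrow> set xs \<subseteq> V \<longrightarrow> successively E xs \<longrightarrow> hd xs = u \<longrightarrow> (edgeV V E)\<^sup>*\<^sup>* u (last xs)"
  proof (induction xs)
    case Nil then show ?case by simp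
  next
    case (Cons a ys)
    show ?case
    proof (cases ys)
      case Nil then show ?thesis by simp
    next
      case (Cons b zs)
      then show ?thesis using Cons.IH
        by (auto simp: edgeV_def intro: converse_rtranclp_into_rtranclp)
    qed
  qed
  then show "u \<in> V \<and> (edgeV V E)\<^sup>*\<^sup>* u w"
    using xs unfolding is_path_conv by (metis hd_in_set subsetD)
qed

lemma joined_trans: "joined V E u v \<Longrightarrow> joined V E v w \<Longrightarrow> joined V E u w"
  unfolding joined_rtranclp by auto

lemma is_path_rev:
  assumes "\<And>x y. E x y \<Longrightarrow> E y x" "is_path V E xs" shows "is_path V E (rev xs)"
  using assms unfolding is_path_conv by (auto intro: successively_mono)

lemma joined_sym:
  assumes "\<And>x y. E x y \<Longrightarrow> E y x" "joined V E u v" shows "joined V E v u"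
proof -
  obtain xs where xs: "is_path V E xs" "hd xs = u" "last xs = v"
    using assms(2) unfolding joined_def by blast
  then have "is_path V E (rev xs)" "hd (rev xs) = v" "last (rev xs) = u"
    using is_path_rev[OF assms(1) xs(1)] xs(1) by (auto simp: is_path_def hd_rev last_rev)
  then show ?thesis unfolding joined_def by blast
qed

lemma is_path_mono:
  "is_path V E xs \<Longrightarrow> set xs \<subseteq> V' \<Longrightarrow> (\<And>x y. x \<in> set xs \<Longrightarrow> y \<in> set xs \<Longrightarrow> E x y \<Longrightarrow> E' x y) \<Longrightarrow> is_path V' E' xs"
  unfolding is_path_def by (meson nth_mem Suc_lessD)

lemma is_path_induced_iff:
  "is_path W (induced E W) xs \<longleftrightarrow> is_path UNIV E xs \<and> set xs \<subseteq> W"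
  unfolding is_path_def induced_def by (auto dest: Suc_lessD)

lemma is_path_sub: "is_path V E xs \<Longrightarrow> is_path UNIV E xs"
  unfolding is_path_def by auto

definition ua :: "nat \<Rightarrow> nat" where "ua n = fst (prod_decode (fst (prod_decode n)))"
definition va :: "nat \<Rightarrow> nat" where "va n = snd (prod_decode (fst (prod_decode n)))"
definition act :: "nat \<Rightarrow> nat \<Rightarrow> bool" where "act s n \<longleftrightarrow> ua n < n*s \<and> va n < n*s"

definition E0 :: "nat \<Rightarrow> nat \<Rightarrow> nat \<Rightarrow> bool" where
  "E0 s x y \<longleftrightarrow> (\<exists>n p. Suc p < s \<and> x = n*s+p \<and> y = n*s+Suc p)
     \<or> (\<exists>n. act s n \<and> x = ua n \<and> y = n*s)
     \<or> (\<exists>n. act s n \<and> x = va n \<and> y = n*s+(s-1))"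

definition Hs :: "nat \<Rightarrow> nat \<Rightarrow> nat \<Rightarrow> bool" where
  "Hs s x y \<longleftrightarrow> E0 s x y \<or> E0 s y x"

lemma Hs_sym: "Hs s x y \<Longrightarrow> Hs s y x" unfolding Hs_def by blast

lemma blk_simps: fixes p s n :: nat assumes "p < s" shows "(n*s+p) div s = n \<and> (n*s+p) mod s = p"
proof -
  have "s \<noteq> 0" using assms by simp
  then show ?thesis using assms by simp
qed

lemma decomp: fixes p s q n m :: nat assumes "p < s" "q < s" "n*s+p = m*s+q" shows "n = m \<and> p = q"
  using blk_simps[OF assms(1), of n] blk_simps[OF assms(2), of m] assms(3) by metis

lemma lt_blk: assumes "(m::nat)*s \<le> z" "z < (Suc n)*s" shows "m \<le> n"
proof -
  have "m*s < Suc n * s" using assms by linarith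
  then have "m < Suc n" by (rule mult_less_cancel2[THEN iffD1, THEN conjunct2])
  then show ?thesis by simp
qed

lemma Hs_irrefl: "\<not> Hs s x x"
  unfolding Hs_def E0_def act_def by auto

lemma graph_Hs: "graph UNIV (Hs s)"
  unfolding graph_def using Hs_irrefl Hs_sym by blast

lemma nbr_class:
  assumes s: "1 \<le> s" and p: "p < s" and y: "y = n*s+p" and e: "Hs s y z" and z: "z < Suc n * s"
  shows "(0 < p \<and> z = y - 1) \<or> (Suc p < s \<and> z = y + 1) \<or> (p = 0 \<and> act s n \<and> z = ua n)
        \<or> (p = s - 1 \<and> act s n \<and> z = va n)"
proof -
  have "E0 s y z \<or> E0 s z y" using e unfolding Hs_def .
  then show ?thesis
  proof
    assume "E0 s y z"
    then consider (a) m q where "Suc q < s" "y = m*s+q" "z = m*s+Suc q"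
      | (b) m where "act s m" "y = ua m" "z = m*s"
      | (c) m where "act s m" "y = va m" "z = m*s+(s-1)"
      unfolding E0_def by blast
    then show ?thesis
    proof cases
      case a
      have "n*s+p = m*s+q" using y a(2) by simp
      then have "n = m" "p = q" using decomp[of p s q n m] p a(1) by auto
      then have "z = y + 1" using a(3) y by simp
      then show ?thesis using a(1) \<open>p = q\<close> by blast
    next
      case b
      have "m \<le> n" using lt_blk[of m s z n] z b(3) by simp
      then have "m*s \<le> n*s" by simp
      moreover have "y < m*s" using b act_def by simp
      ultimately show ?thesis using y by linarith
    next
      case c
      have "m*s \<le> z" using c(3) by simp
      then have "m \<le> n" using lt_blk[of m s z n] z by simp
      then have "m*s \<le> n*s" by simp
      moreover have "y < m*s" using c act_def by simp
      ultimately show ?thesis using y by linarith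
    qed
  next
    assume "E0 s z y"
    then consider (a) m q where "Suc q < s" "z = m*s+q" "y = m*s+Suc q"
      | (b) m where "act s m" "z = ua m" "y = m*s"
      | (c) m where "act s m" "y = m*s+(s-1)" "z = va m"
      unfolding E0_def by blast
    then show ?thesis
    proof cases
      case a
      have "n*s+p = m*s+Suc q" using y a(3) by simp
      then have "n = m" "p = Suc q" using decomp[of p s "Suc q" n m] p a(1) by auto
      then have "z = y - 1" using a(2) y by simp
      then show ?thesis using \<open>p = Suc q\<close> by simp
    next
      case b
      have "n*s+p = m*s+0" using y b(3) by simp
      then have "n = m" "p = 0" using decomp[of p s 0 n m] p s by auto
      then show ?thesis using b by simp
    next
      case c
      have "n*s+p = m*s+(s-1)" using y c(2) by simp
      then have "n = m" "p = s - 1" using decomp[of p s "s-1" n m] p s by auto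
      then show ?thesis using c by simp
    qed
  qed
qed

lemma cycle_nbrs:
  assumes c: "is_cycle V E xs" and y: "y \<in> set xs"
  shows "\<exists>a c. a \<noteq> c \<and> a \<in> set xs \<and> c \<in> set xs \<and> (E y a \<or> E a y) \<and> (E y c \<or> E c y)"
proof -
  have len: "length xs \<ge> 3" and dist: "distinct xs"
    and adj: "\<And>i. Suc i < length xs \<Longrightarrow> E (xs ! i) (xs ! Suc i)"
    and cl: "E (last xs) (hd xs)"
    using c unfolding is_cycle_def is_path_def by auto
  obtain i where i: "i < length xs" "xs ! i = y" using y by (metis in_set_conv_nth)
  have ne: "xs \<noteq> []" using len by auto
  have lastx: "last xs = xs ! (length xs - 1)" using ne by (simp add: last_conv_nth)
  have hdx: "hd xs = xs ! 0" using ne by (simp add: hd_conv_nth)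
  have neq: "\<And>j k. j < length xs \<Longrightarrow> k < length xs \<Longrightarrow> j \<noteq> k \<Longrightarrow> xs ! j \<noteq> xs ! k"
    using dist by (simp add: nth_eq_iff_index_eq)
  show ?thesis
  proof (cases "i = 0")
    case True
    show ?thesis
      apply (rule exI[of _ "xs ! (length xs - 1)"], rule exI[of _ "xs ! 1"])
      using True i len neq[of "length xs - 1" 1] adj[of 0] cl lastx hdx by auto
  next
    case False
    show ?thesis
    proof (cases "Suc i = length xs")
      case True
      have i1: "i - 1 < length xs" "i - 1 \<noteq> 0" using True len by auto
      have l0: "0 < length xs" using len by linarith
      have "xs ! (i - 1) \<noteq> xs ! 0" using neq[OF i1(1) l0 i1(2)] .
      moreover have "E (xs ! (i - 1)) y" using adj[of "i - 1"] i1 i False by auto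
      moreover have "E y (xs ! 0)" using cl lastx hdx True i(2) by (metis diff_Suc_1)
      ultimately show ?thesis using i1 ne by (metis nth_mem length_greater_0_conv)
    next
      case F2: False
      show ?thesis
        apply (rule exI[of _ "xs ! (i - 1)"], rule exI[of _ "xs ! Suc i"])
        using F2 False i len neq[of "i - 1" "Suc i"] adj[of "i - 1"] adj[of i] by auto
    qed
  qed
qed


lemma girth:
  assumes s: "2 \<le> s" and c: "is_cycle UNIV (Hs s) xs"
  shows "Suc s \<le> length xs"
proof -
  have ne: "xs \<noteq> []" and dist: "distinct xs"
    using c unfolding is_cycle_def is_path_def by auto
  define x where "x = Max (set xs)"
  have xin: "x \<in> set xs" using ne unfolding x_def by simp
  have le: "\<And>y. y \<in> set xs \<Longrightarrow> y \<le> x" unfolding x_def by simp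
  define n where "n = x div s"
  define p0 where "p0 = x mod s"
  have p0s: "p0 < s" using s unfolding p0_def by simp
  have xeq: "x = n*s + p0" unfolding n_def p0_def by simp
  have xlt: "x < Suc n * s" using xeq p0s by simp
  have nb: "\<And>y. y \<in> set xs \<Longrightarrow> \<exists>a c. a \<noteq> c \<and> a \<in> set xs \<and> c \<in> set xs \<and> Hs s y a \<and> Hs s y c"
    using cycle_nbrs[OF c] Hs_sym by metis
  have cls: "(0 < p \<and> z = n*s+p - 1) \<or> (Suc p < s \<and> z = n*s+p + 1) \<or> (p = 0 \<and> act s n \<and> z = ua n)
        \<or> (p = s - 1 \<and> act s n \<and> z = va n)"
    if "p < s" "Hs s (n*s+p) z" "z \<in> set xs" for p z
  proof -
    have "z < Suc n * s" using le[OF that(3)] xlt by simp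
    then show ?thesis using nbr_class[of s p "n*s+p" n z] that s by simp
  qed
  have up: "n*s + Suc p \<in> set xs" if h: "Suc p < s" "n*s+p \<in> set xs" for p
  proof (rule ccontr)
    assume nin: "n*s + Suc p \<notin> set xs"
    obtain a c where ac: "a \<noteq> c" "a \<in> set xs" "c \<in> set xs" "Hs s (n*s+p) a" "Hs s (n*s+p) c"
      using nb[OF h(2)] by blast
    have A: "(0 < p \<and> a = n*s+p - 1) \<or> (p = 0 \<and> act s n \<and> a = ua n)"
      using cls[of p a] ac h nin by auto
    have C: "(0 < p \<and> c = n*s+p - 1) \<or> (p = 0 \<and> act s n \<and> c = ua n)"
      using cls[of p c] ac h nin by auto
    show False using A C ac(1) by auto
  qed
  have down: "n*s + (p - 1) \<in> set xs" if h: "0 < p" "p < s" "n*s+p \<in> set xs" for p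
  proof (rule ccontr)
    assume nin: "n*s + (p - 1) \<notin> set xs"
    have e: "n*s + (p - 1) = n*s+p - 1" using h(1) by simp
    obtain a c where ac: "a \<noteq> c" "a \<in> set xs" "c \<in> set xs" "Hs s (n*s+p) a" "Hs s (n*s+p) c"
      using nb[OF h(3)] by blast
    have A: "(Suc p < s \<and> a = n*s+p + 1) \<or> (p = s - 1 \<and> act s n \<and> a = va n)"
      using cls[of p a] ac h nin e by auto
    have C: "(Suc p < s \<and> c = n*s+p + 1) \<or> (p = s - 1 \<and> act s n \<and> c = va n)"
      using cls[of p c] ac h nin e by auto
    show False using A C ac(1) by auto
  qed
  have zero: "act s n \<and> ua n \<in> set xs" if h: "n*s \<in> set xs"
  proof (rule ccontr)
    assume nin: "\<not> (act s n \<and> ua n \<in> set xs)"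
    obtain a c where ac: "a \<noteq> c" "a \<in> set xs" "c \<in> set xs" "Hs s (n*s+0) a" "Hs s (n*s+0) c"
      using nb[OF h] by auto
    have A: "a = n*s + 0 + 1"
      using cls[of 0 a] ac nin s by auto
    have C: "c = n*s + 0 + 1"
      using cls[of 0 c] ac nin s by auto
    show False using A C ac(1) by auto
  qed
  have upk: "p0 + k < s \<longrightarrow> n*s + (p0 + k) \<in> set xs" for k
  proof (induction k)
    case 0 then show ?case using xin xeq by simp
  next
    case (Suc k) then show ?case using up[of "p0 + k"] by simp
  qed
  have downk: "k \<le> p0 \<longrightarrow> n*s + (p0 - k) \<in> set xs" for k
  proof (induction k)
    case 0 then show ?case using xin xeq by simp
  next
    case (Suc k)
    show ?case
    proof
      assume k: "Suc k \<le> p0"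
      then have "n*s + (p0 - k) \<in> set xs" using Suc by simp
      then have "n*s + (p0 - k - 1) \<in> set xs" using down[of "p0 - k"] k p0s by simp
      then show "n*s + (p0 - Suc k) \<in> set xs" by simp
    qed
  qed
  have all: "n*s + p \<in> set xs" if "p < s" for p
  proof (cases "p0 \<le> p")
    case True then show ?thesis using upk[of "p - p0"] that by simp
  next
    case False then show ?thesis using downk[of "p0 - p"] by simp
  qed
  have z: "act s n \<and> ua n \<in> set xs" using zero all[of 0] s by simp
  have sub: "insert (ua n) ((\<lambda>p. n*s+p) ` {..<s}) \<subseteq> set xs" using z all by auto
  have "ua n \<notin> (\<lambda>p. n*s+p) ` {..<s}" using z act_def by auto
  then have "card (insert (ua n) ((\<lambda>p. n*s+p) ` {..<s})) = Suc s"
    by (simp add: card_image inj_on_def)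
  moreover have "card (insert (ua n) ((\<lambda>p. n*s+p) ` {..<s})) \<le> card (set xs)"
    using sub by (simp add: card_mono)
  ultimately show ?thesis using distinct_card[OF dist] by simp
qed


lemma block_path:
  assumes s: "1 \<le> s" and a: "act s n" and d: "ua n \<noteq> va n"
  shows "is_path UNIV (Hs s) (ua n # [n*s..<n*s+s] @ [va n])"
proof -
  have u: "ua n < n*s" and v: "va n < n*s" using a act_def by auto
  have s1: "successively (Hs s) [n*s..<n*s+s]"
    unfolding successively_conv_nth
  proof (intro allI impI)
    fix i assume "Suc i < length [n*s..<n*s+s]"
    then have i: "Suc i < s" by simp
    have "E0 s (n*s+i) (n*s+Suc i)" unfolding E0_def using i by blast
    then show "Hs s ([n*s..<n*s+s] ! i) ([n*s..<n*s+s] ! Suc i)"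
      using i unfolding Hs_def by simp
  qed
  have l: "Hs s (n*s+s-1) (va n)"
  proof -
    have "E0 s (va n) (n*s+(s-1))" unfolding E0_def using a by blast
    moreover have "n*s+(s-1) = n*s+s-1" using s by simp
    ultimately show ?thesis unfolding Hs_def by simp
  qed
  have f: "Hs s (ua n) (n*s)" unfolding Hs_def E0_def using a by blast
  have "successively (Hs s) (ua n # [n*s..<n*s+s] @ [va n])"
    using s1 l f s by (simp add: successively_Cons successively_append_iff)
  moreover have "distinct (ua n # [n*s..<n*s+s] @ [va n])" using u v d by auto
  ultimately show ?thesis unfolding is_path_conv by simp
qed

lemma ic_Hs:
  assumes s: "1 \<le> s"
  shows "infinitely_connected UNIV (Hs s)"
  unfolding infinitely_connected_def
proof (intro conjI allI impI)
  show "infinite (UNIV :: nat set)" by simp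
  fix F :: "nat set" assume F: "finite F \<and> F \<subseteq> UNIV"
  show "connected_graph (UNIV - F) (induced (Hs s) (UNIV - F))"
    unfolding connected_graph_def
  proof (intro conjI ballI)
    show "UNIV - F \<noteq> {}" using F by (metis Diff_empty Diff_eq_empty_iff finite_subset infinite_UNIV_nat subset_UNIV)
    fix u v assume uv: "u \<in> UNIV - F" "v \<in> UNIV - F"
    show "joined (UNIV - F) (induced (Hs s) (UNIV - F)) u v"
    proof (cases "u = v")
      case True then show ?thesis using uv joined_refl by metis
    next
      case False
      define j where "j = u + v + sum id F + 1"
      define n where "n = prod_encode (prod_encode (u, v), j)"
      have uan: "ua n = u" "va n = v" unfolding n_def ua_def va_def by simp_all
      have "j \<le> n" unfolding n_def by (rule le_prod_encode_2)
      moreover have "n \<le> n*s" using s by simp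
      ultimately have jn: "j \<le> n*s" by linarith
      have act: "act s n" unfolding act_def uan using jn j_def by simp
      have fF: "f < n*s" if "f \<in> F" for f
      proof -
        have "f \<le> sum id F" using member_le_sum[of f F id] that F by simp
        then show ?thesis using jn j_def by simp
      qed
      let ?ps = "ua n # [n*s..<n*s+s] @ [va n]"
      have "is_path UNIV (Hs s) ?ps" using block_path[OF s act] uan False by simp
      moreover have "set ?ps \<subseteq> UNIV - F" using uv uan fF by fastforce
      ultimately have "is_path (UNIV - F) (induced (Hs s) (UNIV - F)) ?ps"
        using is_path_induced_iff by blast
      moreover have "hd ?ps = u" "last ?ps = v" using uan by simp_all
      ultimately show ?thesis unfolding joined_def by blast
    qed
  qed
qed

lemma ua_lt: "act s n \<Longrightarrow> ua n < n * s" "act s n \<Longrightarrow> va n < n * s"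
  unfolding act_def by auto

function pot :: "nat \<Rightarrow> nat \<Rightarrow> nat \<Rightarrow> nat \<Rightarrow> nat" where
  "pot s N K y = (if y < N \<or> s = 0 then 0 else if act s (y div s) then
     min K (min (pot s N K (ua (y div s)) + y mod s + 1) (pot s N K (va (y div s)) + (s - y mod s)))
     else K)"
  by auto
termination
proof (relation "measure (\<lambda>(s,N,K,y). y)")
  show "wf (measure (\<lambda>(s,N,K,y). y))" by simp
next
  fix s N K y :: nat
  assume "\<not> (y < N \<or> s = 0)" "act s (y div s)"
  then show "((s, N, K, ua (y div s)), s, N, K, y) \<in> measure (\<lambda>(s, N, K, y). y)"
    using ua_lt(1)[of s "y div s"] div_times_less_eq_dividend[of y s] by (simp add: less_le_trans)
next
  fix s N K y :: nat
  assume "\<not> (y < N \<or> s = 0)" "act s (y div s)"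
  then show "((s, N, K, va (y div s)), s, N, K, y) \<in> measure (\<lambda>(s, N, K, y). y)"
    using ua_lt(2)[of s "y div s"] div_times_less_eq_dividend[of y s] by (simp add: less_le_trans)
qed

declare pot.simps[simp del]

lemma pot_le: "pot s N K y \<le> K"
  by (subst pot.simps) auto

lemma pot_low: "y < N \<Longrightarrow> pot s N K y = 0"
  by (subst pot.simps) auto

lemma pot_lip0:
  assumes s: "1 \<le> s" and K: "K \<le> s" and N: "N = n0 * s" and e: "E0 s x y"
  shows "pot s N K y \<le> pot s N K x + 1 \<and> pot s N K x \<le> pot s N K y + 1"
proof -
  consider (a) n p where "Suc p < s" "x = n*s+p" "y = n*s+Suc p"
    | (b) n where "act s n" "x = ua n" "y = n*s"
    | (c) n where "act s n" "x = va n" "y = n*s+(s-1)"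
    using e unfolding E0_def by blast
  then show ?thesis
  proof cases
    case a
    show ?thesis
    proof (cases "n < n0")
      case True
      then have "Suc n * s \<le> n0 * s" by (simp only: mult_le_mono1 Suc_leI)
      then have "x < N" "y < N" using a N by auto
      then show ?thesis using pot_low by simp
    next
      case False
      then have le: "n0 * s \<le> n * s" by simp
      have xy: "\<not> x < N" "\<not> y < N" using a N le by linarith+
      have dx: "x div s = n" "x mod s = p" using blk_simps[of p s n] a by auto
      have dy: "y div s = n" "y mod s = Suc p" using blk_simps[of "Suc p" s n] a by auto
      have px: "pot s N K x = (if act s n then min K (min (pot s N K (ua n) + p + 1) (pot s N K (va n) + (s - p))) else K)"
        using xy s dx by (subst pot.simps) simp
      have py: "pot s N K y = (if act s n then min K (min (pot s N K (ua n) + Suc p + 1) (pot s N K (va n) + (s - Suc p))) else K)"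
        using xy s dy by (subst pot.simps) simp
      show ?thesis using px py a(1) by (auto simp: min_def)
    qed
  next
    case b
    show ?thesis
    proof (cases "y < N")
      case True
      then have "x < N" using b ua_lt by (metis less_trans)
      then show ?thesis using True pot_low by simp
    next
      case False
      have dy: "y div s = n" "y mod s = 0" using blk_simps[of 0 s n] b s by auto
      have py: "pot s N K y = min K (min (pot s N K x + 0 + 1) (pot s N K (va n) + (s - 0)))"
        using False s dy b by (subst pot.simps) simp
      have "pot s N K x \<le> K" by (rule pot_le)
      then show ?thesis using py K by (auto simp: min_def)
    qed
  next
    case c
    show ?thesis
    proof (cases "y < N")
      case True
      then have "x < N" using c ua_lt by (metis le_add1 less_le_trans less_trans)
      then show ?thesis using True pot_low by simp
    next
      case False
      have dy: "y div s = n" "y mod s = s - 1" using blk_simps[of "s-1" s n] c s by auto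
      have py: "pot s N K y = min K (min (pot s N K (ua n) + (s - 1) + 1) (pot s N K x + (s - (s - 1))))"
        using False s dy c by (subst pot.simps) simp
      have "pot s N K x \<le> K" by (rule pot_le)
      then show ?thesis using py K s by (auto simp: min_def)
    qed
  qed
qed

lemma pot_lip:
  assumes s: "1 \<le> s" and K: "K \<le> s" and N: "N = n0 * s" and e: "Hs s x y"
  shows "pot s N K y \<le> pot s N K x + 1"
  using e pot_lip0[OF s K N, of x y] pot_lip0[OF s K N, of y x] unfolding Hs_def by auto

lemma pot_walk:
  assumes s: "1 \<le> s" and K: "K \<le> s" and N: "N = n0 * s"
  shows "successively (Hs s) xs \<Longrightarrow> xs \<noteq> [] \<Longrightarrow> pot s N K (last xs) \<le> pot s N K (hd xs) + (length xs - 1)"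
proof (induction xs)
  case Nil then show ?case by simp
next
  case (Cons a xs)
  show ?case
  proof (cases xs)
    case Nil then show ?thesis by simp
  next
    case (Cons b ys)
    have "Hs s a b" "successively (Hs s) xs" using Cons.prems Cons by auto
    then have "pot s N K b \<le> pot s N K a + 1" "pot s N K (last xs) \<le> pot s N K b + (length xs - 1)"
      using pot_lip[OF s K N] Cons.IH Cons by auto
    then show ?thesis using Cons by simp
  qed
qed

lemma pot_top:
  assumes s: "2*k+1 \<le> s" and N: "N = n0 * s"
  shows "pot s N (Suc k) (N + k) = Suc k"
proof -
  have ks: "k < s" using s by simp
  have d: "(N+k) div s = n0" "(N+k) mod s = k" using blk_simps[OF ks, of n0] N by auto
  show ?thesis using s d by (subst pot.simps) (auto simp: min_def)
qed

lemma succ_map: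
  assumes "successively E xs" "set xs \<subseteq> V"
    "\<And>x y. x \<in> V \<Longrightarrow> y \<in> V \<Longrightarrow> E x y \<Longrightarrow> E' (f x) (f y)"
  shows "successively E' (map f xs)"
  using assms by (induction xs rule: induct_list012) auto

lemma map_path:
  assumes p: "is_path V E xs" and inj: "inj_on f V"
    and e: "\<And>x y. x \<in> V \<Longrightarrow> y \<in> V \<Longrightarrow> E x y \<Longrightarrow> E' (f x) (f y)"
  shows "is_path UNIV E' (map f xs)"
proof -
  have "xs \<noteq> []" "distinct xs" "set xs \<subseteq> V" "successively E xs" using p unfolding is_path_conv by auto
  moreover have "successively E' (map f xs)"
    using succ_map[of E xs V E' f] \<open>successively E xs\<close> \<open>set xs \<subseteq> V\<close> e by blast
  ultimately show ?thesis unfolding is_path_conv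
    using inj by (simp add: distinct_map inj_on_subset)
qed

lemma forward_forest:
  assumes all: "\<forall>(VH :: nat set) Hs. graph VH Hs \<and> infinite VH \<and> infinitely_connected VH Hs
            \<longrightarrow> has_spanning_copy VH Hs VT ET"
  shows "forest VT ET"
proof (rule ccontr)
  assume "\<not> forest VT ET"
  then obtain xs where c: "is_cycle VT ET xs" unfolding forest_def by blast
  define s where "s = length xs + 2"
  have s2: "2 \<le> s" and s1: "1 \<le> s" unfolding s_def by simp_all
  have "has_spanning_copy UNIV (Hs s) VT ET"
    using all graph_Hs ic_Hs[OF s1] by simp
  then obtain f where f: "bij_betw f VT UNIV" "\<And>x y. x \<in> VT \<Longrightarrow> y \<in> VT \<Longrightarrow> ET x y \<Longrightarrow> Hs s (f x) (f y)"
    unfolding has_spanning_copy_def by blast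
  have inj: "inj_on f VT" using f(1) bij_betw_def by blast
  have p: "is_path VT ET xs" and l3: "3 \<le> length xs" and cl: "ET (last xs) (hd xs)"
    using c unfolding is_cycle_def by auto
  have ne: "xs \<noteq> []" using l3 by auto
  have mp: "is_path UNIV (Hs s) (map f xs)" using map_path[OF p inj] f(2) by blast
  have "last xs \<in> VT" "hd xs \<in> VT" using p ne unfolding is_path_conv by auto
  then have "Hs s (last (map f xs)) (hd (map f xs))" using f(2) cl ne by (simp add: last_map hd_map)
  then have "is_cycle UNIV (Hs s) (map f xs)" using mp l3 unfolding is_cycle_def by simp
  then have "Suc s \<le> length xs" using girth[OF s2, of "map f xs"] by simp
  then show False unfolding s_def by simp
qed

lemma radius_mono: "radius_le V E a \<Longrightarrow> a \<le> b \<Longrightarrow> radius_le V E b"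
  unfolding radius_le_def by (meson order_trans)

lemma component_sub: "component V E v \<subseteq> V" unfolding component_def by auto

lemma forward_radius:
  assumes all: "\<forall>(VH :: nat set) Hs. graph VH Hs \<and> infinite VH \<and> infinitely_connected VH Hs
            \<longrightarrow> has_spanning_copy VH Hs VT ET"
  shows "(\<exists>C\<in>components VT ET. unbounded_radius C (induced ET C)) \<or> infinite (components VT ET)"
proof (rule ccontr)
  assume "\<not> ?thesis"
  then have bnd: "\<forall>C\<in>components VT ET. \<exists>k. radius_le C (induced ET C) k"
    and fin: "finite (components VT ET)"
    unfolding unbounded_radius_def by auto
  obtain kf where kf: "\<forall>C\<in>components VT ET. radius_le C (induced ET C) (kf C)"
    using bnd by metis
  define k where "k = sum kf (components VT ET)"
  have rk: "radius_le C (induced ET C) k" if "C \<in> components VT ET" for C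
    using radius_mono kf that member_le_sum[of C "components VT ET" kf] fin unfolding k_def by fastforce
  define cen where "cen C = (SOME u. u \<in> C \<and> (\<forall>w\<in>C. \<exists>xs. is_path C (induced ET C) xs \<and> hd xs = u \<and> last xs = w
        \<and> length xs - 1 \<le> k))" for C
  have cen: "cen C \<in> C \<and> (\<forall>w\<in>C. \<exists>xs. is_path C (induced ET C) xs \<and> hd xs = cen C \<and> last xs = w
        \<and> length xs - 1 \<le> k)" if "C \<in> components VT ET" for C
    using rk[OF that] unfolding radius_le_def cen_def by (rule someI_ex[OF bexE]) blast+
  define s where "s = 2*k+2"
  have s1: "1 \<le> s" and Ks: "Suc k \<le> s" and s3: "2*k+1 \<le> s" unfolding s_def by simp_all
  have "has_spanning_copy UNIV (Hs s) VT ET"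
    using all graph_Hs ic_Hs[OF s1] by simp
  then obtain f where f: "bij_betw f VT UNIV" "\<And>x y. x \<in> VT \<Longrightarrow> y \<in> VT \<Longrightarrow> ET x y \<Longrightarrow> Hs s (f x) (f y)"
    unfolding has_spanning_copy_def by blast
  define M where "M = sum (\<lambda>C. f (cen C)) (components VT ET)"
  define N where "N = Suc M * s"
  obtain t where t: "t \<in> VT" "f t = N + k" using f(1) by (metis UNIV_I bij_betw_iff_bijections)
  define C where "C = component VT ET t"
  have C: "C \<in> components VT ET" unfolding C_def components_def using t by simp
  have tC: "t \<in> C" unfolding C_def component_def using t joined_refl by fastforce
  obtain xs where xs: "is_path C (induced ET C) xs" "hd xs = cen C" "last xs = t" "length xs - 1 \<le> k"
    using cen[OF C] tC by blast
  have CV: "C \<subseteq> VT" unfolding C_def by (rule component_sub)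
  have xsC: "set xs \<subseteq> C" and ne: "xs \<noteq> []" and sx: "successively (induced ET C) xs"
    using xs(1) unfolding is_path_conv by auto
  have "successively (Hs s) (map f xs)"
    proof (rule succ_map[of "induced ET C" xs C "Hs s" f])
    fix x y assume "x \<in> C" "y \<in> C" "induced ET C x y"
    then show "Hs s (f x) (f y)" using f(2) CV by (auto simp: induced_def)
  qed (use sx xsC in auto)
  then have "pot s N (Suc k) (last (map f xs)) \<le> pot s N (Suc k) (hd (map f xs)) + (length (map f xs) - 1)"
    using pot_walk[OF s1 Ks, of N "Suc M" "map f xs"] ne N_def by fastforce
  moreover have "last (map f xs) = N + k" using xs t ne by (simp add: last_map)
  moreover have "hd (map f xs) = f (cen C)" using xs ne by (simp add: hd_map)
  moreover have "f (cen C) < N"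
  proof -
    have "f (cen C) \<le> M" unfolding M_def using member_le_sum[of C "components VT ET" "\<lambda>C. f (cen C)"] C fin by simp
    moreover have "Suc M \<le> N" unfolding N_def using s1 by (metis mult.comm_neutral mult_le_mono2)
    ultimately show ?thesis by simp
  qed
  ultimately have "pot s N (Suc k) (N + k) \<le> k" using pot_low xs(4) by simp
  moreover have "pot s N (Suc k) (N + k) = Suc k" using pot_top[OF s3, of N "Suc M"] N_def by simp
  ultimately show False by simp
qed

lemma is_path_slice:
  assumes p: "is_path V E ts" and i: "i < length ts" and m: "0 < m"
  shows "is_path V E (take m (drop i ts))"
proof -
  have "take m (drop i ts) \<noteq> []" using i m by simp
  moreover have "distinct (take m (drop i ts))" using p unfolding is_path_def by simp
  moreover have "set (take m (drop i ts)) \<subseteq> V" using p unfolding is_path_def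
    by (meson in_set_dropD in_set_takeD subset_iff)
  moreover have "\<forall>k. Suc k < length (take m (drop i ts)) \<longrightarrow>
      E (take m (drop i ts) ! k) (take m (drop i ts) ! Suc k)"
  proof (intro allI impI)
    fix k assume k: "Suc k < length (take m (drop i ts))"
    then have "Suc (i + k) < length ts" by (simp add: less_diff_conv)
    then have "E (ts ! (i+k)) (ts ! Suc (i+k))" using p unfolding is_path_def by blast
    then show "E (take m (drop i ts) ! k) (take m (drop i ts) ! Suc k)" using k by (simp add: less_diff_conv)
  qed
  ultimately show ?thesis unfolding is_path_def by blast
qed

lemma is_path_take: "is_path V E ts \<Longrightarrow> 0 < m \<Longrightarrow> is_path V E (take m ts)"
  using is_path_slice[of V E ts 0 m] unfolding is_path_def by auto

lemma is_path_drop: "is_path V E ts \<Longrightarrow> i < length ts \<Longrightarrow> is_path V E (drop i ts)"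
  using is_path_slice[of V E ts i "length ts"] by (simp add: is_path_def)

lemma forest_chord:
  assumes f: "forest V E" and sym: "\<And>x y. E x y \<Longrightarrow> E y x"
    and p: "is_path V E ts" and ij: "Suc i < j" "j < length ts" and e: "E (ts ! i) (ts ! j)"
  shows False
proof -
  define cs where "cs = take (j - i + 1) (drop i ts)"
  have il: "i < length ts" using ij by simp
  have cp: "is_path V E cs" unfolding cs_def using is_path_slice[OF p il] by simp
  have lc: "length cs = j - i + 1" unfolding cs_def using ij by simp
  have hc: "hd cs = ts ! i" unfolding cs_def using il by (simp add: hd_drop_conv_nth)
  have csne: "cs \<noteq> []" using lc by auto
  have "last cs = cs ! (j - i)" using csne lc by (simp add: last_conv_nth)
  also have "\<dots> = ts ! j" unfolding cs_def using ij by simp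
  finally have lcs: "last cs = ts ! j" .
  have l3: "3 \<le> length cs" using lc ij by simp
  have "E (last cs) (hd cs)" using hc lcs sym[OF e] by simp
  then have "is_cycle V E cs" unfolding is_cycle_def using cp l3 by simp
  then show False using f unfolding forest_def by blast
qed

lemma joined_mono_induced:
  assumes "joined D (induced E D) x y" "D \<subseteq> D'" shows "joined D' (induced E D') x y"
proof -
  obtain xs where xs: "is_path D (induced E D) xs" "hd xs = x" "last xs = y"
    using assms(1) unfolding joined_def by blast
  have "is_path UNIV E xs" "set xs \<subseteq> D" using xs(1) unfolding is_path_induced_iff by auto
  then have "is_path D' (induced E D') xs" unfolding is_path_induced_iff using assms(2) by auto
  then show ?thesis using xs unfolding joined_def by blast
qed

lemma joined_prefix_V:
  assumes p: "is_path V E ts" and i: "i < length ts"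
  shows "joined V E (hd ts) (ts ! i)"
proof -
  have "is_path V E (take (Suc i) ts)" using is_path_take[OF p] by simp
  moreover have "hd (take (Suc i) ts) = hd ts" using i by (simp add: hd_take)
  moreover have "last (take (Suc i) ts) = ts ! i" using i by (simp add: take_Suc_conv_app_nth)
  ultimately show ?thesis unfolding joined_def by blast
qed

lemma joined_prefix:
  assumes p: "is_path V E ts" and i: "i < length ts" and sub: "set ts \<subseteq> W"
  shows "joined W (induced E W) (hd ts) (ts ! i)"
proof -
  have "is_path V E (take (Suc i) ts)" using is_path_take[OF p] by simp
  then have a: "is_path UNIV E (take (Suc i) ts)" by (rule is_path_sub)
  have b: "set (take (Suc i) ts) \<subseteq> W" using sub set_take_subset[of "Suc i" ts] by blast
  have "is_path W (induced E W) (take (Suc i) ts)" unfolding is_path_induced_iff using a b by simp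
  moreover have "hd (take (Suc i) ts) = hd ts" using i by (simp add: hd_take)
  moreover have "last (take (Suc i) ts) = ts ! i" using i by (simp add: take_Suc_conv_app_nth)
  ultimately show ?thesis unfolding joined_def by blast
qed

lemma induced_joined_V:
  assumes "joined D (induced E D) x y" "D \<subseteq> V" shows "joined V E x y"
proof -
  obtain xs where xs: "is_path D (induced E D) xs" "hd xs = x" "last xs = y"
    using assms(1) unfolding joined_def by blast
  have "is_path UNIV E xs" "set xs \<subseteq> D" using xs(1) unfolding is_path_induced_iff by auto
  then have "is_path V E xs" using assms(2) unfolding is_path_def by auto
  then show ?thesis using xs unfolding joined_def by blast
qed

lemma forest_attach:
  assumes f: "forest V E" and sym: "\<And>x y. E x y \<Longrightarrow> E y x"
    and DV: "D \<subseteq> V"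
    and conn: "\<forall>x\<in>D. \<forall>y\<in>D. joined V E x y \<longrightarrow> joined D (induced E D) x y"
    and p: "is_path V E ts" and b: "hd ts \<in> D" and tl: "set (tl ts) \<inter> D = {}"
    and i: "0 < i" "i < length ts" and d: "d \<in> D" and e: "E (ts ! i) d"
  shows "i = 1 \<and> d = hd ts"
proof (cases "d = hd ts")
  case True
  have ne: "ts \<noteq> []" using i by auto
  then have "ts ! 0 = d" using True by (simp add: hd_conv_nth)
  show ?thesis
  proof (rule ccontr)
    assume "\<not> (i = 1 \<and> d = hd ts)"
    then have "Suc 0 < i" using True i by auto
    moreover have "E (ts ! 0) (ts ! i)" using sym[OF e] \<open>ts ! 0 = d\<close> by simp
    ultimately show False using forest_chord[OF f sym p, of 0 i] i by blast
  qed
next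
  case False
  have ne: "ts \<noteq> []" using i by auto
  have "joined V E (hd ts) (ts ! i)" using joined_prefix_V[OF p i(2)] .
  then have "joined V E (hd ts) d" using joined_step[of V E "hd ts" "ts ! i" d] e d DV by blast
  then have "joined D (induced E D) (hd ts) d" using conn b d by blast
  then obtain P where P: "is_path D (induced E D) P" "hd P = hd ts" "last P = d"
    unfolding joined_def by blast
  define Q where "Q = rev (take i (tl ts))"
  have tli: "tl ts ! k = ts ! Suc k" if "k < i" for k using that i by (simp add: nth_tl)
  have lQ: "length Q = i" unfolding Q_def using i by simp
  have Qne: "Q \<noteq> []" using lQ i by auto
  have lt: "length (take i (tl ts)) = i" using i by simp
  have ltne: "take i (tl ts) \<noteq> []" using lt i(1) by (metis length_greater_0_conv)
  have nt: "take i (tl ts) ! k = ts ! Suc k" if "k < i" for k using that i by (simp add: nth_tl)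
  have hQ: "hd Q = ts ! i"
  proof -
    have "hd Q = last (take i (tl ts))" unfolding Q_def by (simp add: hd_rev)
    also have "\<dots> = take i (tl ts) ! (i - 1)" using ltne lt by (simp add: last_conv_nth)
    also have "\<dots> = ts ! i" using nt[of "i - 1"] i by simp
    finally show ?thesis .
  qed
  have lastQ: "last Q = ts ! 1"
  proof -
    have "last Q = hd (take i (tl ts))" unfolding Q_def by (simp add: last_rev)
    also have "\<dots> = take i (tl ts) ! 0" using ltne by (simp add: hd_conv_nth)
    also have "\<dots> = ts ! 1" using nt[of 0] i by simp
    finally show ?thesis .
  qed
  have tlp: "is_path V E (tl ts)" if "1 < length ts"
    using is_path_drop[OF p, of 1] that by (simp add: drop_Suc)
  have Qp: "is_path V E Q"
  proof -
    have "1 < length ts" using i by simp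
    then have "is_path V E (take i (tl ts))" using is_path_take[OF tlp] i by simp
    then show ?thesis unfolding Q_def using is_path_rev[of E V "take i (tl ts)"] sym by blast
  qed
  have QD: "set Q \<inter> D = {}" unfolding Q_def using tl set_take_subset[of i "tl ts"] by auto
  have PP: "is_path UNIV E P \<and> set P \<subseteq> D" using P(1) unfolding is_path_induced_iff .
  then have PD: "set P \<subseteq> D" by simp
  have Pp: "is_path V E P" using PP DV unfolding is_path_def by blast
  have Pl: "2 \<le> length P"
  proof (rule ccontr)
    assume n2: "\<not> 2 \<le> length P"
    have "P \<noteq> []" using Pp unfolding is_path_def by simp
    then have "0 < length P" by simp
    with n2 have "length P = 1" by linarith
    then have "hd P = last P" by (cases P) auto
    then show False using P False by simp
  qed
  define cs where "cs = P @ Q"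
  have "is_cycle V E cs"
  proof -
    have "length cs \<ge> 3" unfolding cs_def using Pl lQ i by simp
    moreover have "is_path V E cs"
    proof -
      have a: "P \<noteq> []" "distinct P" "set P \<subseteq> V" "successively E P" using Pp unfolding is_path_conv by auto
      have b: "Q \<noteq> []" "distinct Q" "set Q \<subseteq> V" "successively E Q" using Qp unfolding is_path_conv by auto
      have c: "set P \<inter> set Q = {}" using PD QD by blast
      have d: "E (last P) (hd Q)" using P(3) hQ sym[OF e] by simp
      have "successively E (P @ Q)" using a(4) b(4) d by (simp add: successively_append_iff)
      moreover have "distinct (P @ Q)" using a(2) b(2) c by simp
      moreover have "set (P @ Q) \<subseteq> V" using a(3) b(3) by simp
      ultimately show ?thesis unfolding is_path_conv cs_def using a(1) by simp
    qed
    moreover have "E (last cs) (hd cs)"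
    proof -
      have "last cs = ts ! 1" unfolding cs_def using lastQ Qne by simp
      moreover have "hd cs = ts ! 0"
      proof -
        have "P \<noteq> []" using Pp unfolding is_path_def by simp
        then have "hd cs = hd P" unfolding cs_def by simp
        then show ?thesis using P(2) ne by (simp add: hd_conv_nth)
      qed
      moreover have "E (ts ! 0) (ts ! 1)" using p i unfolding is_path_def by simp
      ultimately show ?thesis using sym[of "ts ! 0" "ts ! 1"] by simp
    qed
    ultimately show ?thesis unfolding is_cycle_def by simp
  qed
  then have False using f unfolding forest_def by blast
  then show ?thesis by simp
qed

lemma distinct_last_butlast: assumes "distinct xs" "xs \<noteq> []" shows "last xs \<notin> set (butlast xs)"
proof -
  have "distinct (butlast xs @ [last xs])" using append_butlast_last_id[OF assms(2)] assms(1) by simp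
  then show ?thesis by simp
qed

lemma hd_notin_tl: "distinct xs \<Longrightarrow> xs \<noteq> [] \<Longrightarrow> hd xs \<notin> set (tl xs)"
  by (cases xs) auto

lemma in_tl_nth: "x \<in> set (tl xs) \<longleftrightarrow> (\<exists>i. 0 < i \<and> i < length xs \<and> x = xs ! i)"
proof
  assume "x \<in> set (tl xs)"
  then obtain i where i: "i < length (tl xs)" "tl xs ! i = x" by (auto simp: in_set_conv_nth)
  have "xs ! Suc i = x" using i by (simp add: nth_tl)
  moreover have "Suc i < length xs" using i by simp
  ultimately show "\<exists>i. 0 < i \<and> i < length xs \<and> x = xs ! i" by (intro exI[of _ "Suc i"]) simp
next
  assume "\<exists>i. 0 < i \<and> i < length xs \<and> x = xs ! i"
  then obtain i where i: "0 < i" "i < length xs" "x = xs ! i" by blast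
  then obtain j where j: "i = Suc j" by (cases i) auto
  have "j < length (tl xs)" using i j by simp
  moreover have "tl xs ! j = x" using i j by (simp add: nth_tl)
  ultimately show "x \<in> set (tl xs)" by (metis nth_mem)
qed

lemma obtain_fresh:
  assumes "infinite A" "finite B" obtains x where "x \<in> A" "x \<notin> B"
proof -
  have "infinite (A - B)" using assms by (rule Diff_infinite_finite[rotated])
  then have "A - B \<noteq> {}" by (rule infinite_imp_nonempty)
  then show ?thesis using that by blast
qed

locale setting =
  fixes VT :: "'a set" and ET :: "'a \<Rightarrow> 'a \<Rightarrow> bool" and VH :: "nat set" and EH :: "nat \<Rightarrow> nat \<Rightarrow> bool"
  assumes gT: "graph VT ET" and fT: "forest VT ET" and gH: "graph VH EH" and iH: "infinite VH"
    and cH: "infinitely_connected VH EH"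
begin

lemma symT: "ET x y \<Longrightarrow> ET y x" using gT unfolding graph_def by blast
lemma inT: "ET x y \<Longrightarrow> x \<in> VT \<and> y \<in> VT" using gT unfolding graph_def by blast
lemma irrT: "\<not> ET x x" using gT unfolding graph_def by blast
lemma symH: "EH x y \<Longrightarrow> EH y x" using gH unfolding graph_def by blast

definition valid :: "'a set \<Rightarrow> ('a \<Rightarrow> nat) \<Rightarrow> bool" where
  "valid D \<phi> \<longleftrightarrow> finite D \<and> D \<subseteq> VT \<and> inj_on \<phi> D \<and> \<phi> ` D \<subseteq> VH
     \<and> (\<forall>x\<in>D. \<forall>y\<in>D. ET x y \<longrightarrow> EH (\<phi> x) (\<phi> y))
     \<and> (\<forall>x\<in>D. \<forall>y\<in>D. joined VT ET x y \<longrightarrow> joined D (induced ET D) x y)"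

lemma H_path:
  assumes F: "finite F" and a: "a \<in> VH" "a \<notin> F" and h: "h \<in> VH" "h \<notin> F"
  shows "\<exists>ps. is_path VH EH ps \<and> hd ps = a \<and> last ps = h \<and> set ps \<inter> F = {}"
proof -
  have "connected_graph (VH - (F \<inter> VH)) (induced EH (VH - (F \<inter> VH)))"
    using cH F unfolding infinitely_connected_def by simp
  then have "joined (VH - (F \<inter> VH)) (induced EH (VH - (F \<inter> VH))) a h"
    unfolding connected_graph_def using a h by blast
  then obtain ps where ps: "is_path (VH - (F \<inter> VH)) (induced EH (VH - (F \<inter> VH))) ps" "hd ps = a" "last ps = h"
    unfolding joined_def by blast
  have "is_path UNIV EH ps" "set ps \<subseteq> VH - (F \<inter> VH)" using ps(1) unfolding is_path_induced_iff by auto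
  then have "is_path VH EH ps" "set ps \<inter> F = {}" unfolding is_path_def by auto
  then show ?thesis using ps by blast
qed

lemma H_long:
  assumes F: "finite F" and a: "a \<in> VH" "a \<notin> F"
  shows "\<exists>ps. is_path VH EH ps \<and> hd ps = a \<and> length ps = Suc n \<and> set ps \<inter> F = {}"
proof (induction n)
  case 0
  have "is_path VH EH [a]" using a unfolding is_path_def by simp
  then show ?case using a by auto
next
  case (Suc n)
  then obtain ps where ps: "is_path VH EH ps" "hd ps = a" "length ps = Suc n" "set ps \<inter> F = {}" by blast
  have ne: "ps \<noteq> []" and dps: "distinct ps" and psV: "set ps \<subseteq> VH" using ps(1) unfolding is_path_def by auto
  define z where "z = last ps"
  define F' where "F' = F \<union> set (butlast ps)"
  have zV: "z \<in> VH" using ne psV unfolding z_def by auto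
  have "last ps \<in> set ps" using ne by (rule last_in_set)
  then have zF': "z \<notin> F'" unfolding F'_def z_def using distinct_last_butlast[OF dps ne] ps(4) by blast
  have fF': "finite F'" unfolding F'_def using F by simp
  obtain b where b: "b \<in> VH" "b \<notin> F' \<union> {z}" using obtain_fresh[OF iH, of "F' \<union> {z}"] fF' by auto
  obtain qs where qs: "is_path VH EH qs" "hd qs = z" "last qs = b" "set qs \<inter> F' = {}"
    using H_path[OF fF' zV zF', of b] b by auto
  have qne: "qs \<noteq> []" and dqs: "distinct qs" and qV: "set qs \<subseteq> VH"
    and qE: "\<And>i. Suc i < length qs \<Longrightarrow> EH (qs ! i) (qs ! Suc i)"
    using qs(1) unfolding is_path_def by auto
  have q2: "Suc 0 < length qs"
  proof (rule ccontr)
    assume "\<not> Suc 0 < length qs"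
    then have "length qs = 1" using qne by (cases qs) auto
    then have "hd qs = last qs" by (cases qs) auto
    then show False using qs b by auto
  qed
  define w where "w = qs ! 1"
  have q0: "qs ! 0 = z" using qs(2) qne by (simp add: hd_conv_nth)
  have ezw: "EH z w" using qE[of 0] q2 q0 unfolding w_def by simp
  have wV: "w \<in> VH" using qV q2 unfolding w_def by auto
  have wq: "w \<in> set qs" unfolding w_def using q2 by simp
  have wF': "w \<notin> F'" using qs(4) wq by blast
  have "qs ! 1 \<noteq> qs ! 0" using nth_eq_iff_index_eq[OF dqs, of 1 0] q2 qne by simp
  then have wz: "w \<noteq> z" using q0 unfolding w_def by simp
  have "ps = butlast ps @ [z]" unfolding z_def using ne by simp
  then have "set ps = set (butlast ps @ [z])" by simp
  then have setps: "set ps = set (butlast ps) \<union> {z}" by simp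
  have wps: "w \<notin> set ps" using setps wF' wz unfolding F'_def by auto
  have "is_path VH EH (ps @ [w])"
    using ps(1) wps wV ezw unfolding is_path_conv z_def by (auto simp: successively_append_iff)
  moreover have "hd (ps @ [w]) = a" using ps(2) ne by simp
  moreover have "length (ps @ [w]) = Suc (Suc n)" using ps(3) by simp
  moreover have "set (ps @ [w]) \<inter> F = {}" using ps(4) wF' unfolding F'_def by auto
  ultimately show ?case by blast
qed

lemma add_isolated:
  assumes v: "valid D \<phi>" and t: "t \<in> VT" and nj: "\<forall>d\<in>D. \<not> joined VT ET d t"
    and h: "h \<in> VH" "h \<notin> \<phi> ` D"
  shows "valid (insert t D) (\<phi>(t := h))"
proof -
  have tD: "t \<notin> D"
  proof
    assume "t \<in> D"
    moreover have "joined VT ET t t" using t by (rule joined_refl)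
    ultimately show False using nj by blast
  qed
  have fD: "finite D" "D \<subseteq> VT" "inj_on \<phi> D" "\<phi> ` D \<subseteq> VH"
    and eD: "\<forall>x\<in>D. \<forall>y\<in>D. ET x y \<longrightarrow> EH (\<phi> x) (\<phi> y)"
    and cD: "\<forall>x\<in>D. \<forall>y\<in>D. joined VT ET x y \<longrightarrow> joined D (induced ET D) x y"
    using v unfolding valid_def by auto
  have agree: "\<And>x. x \<in> D \<Longrightarrow> (\<phi>(t := h)) x = \<phi> x" using tD by auto
  have noedge: "\<not> ET d t" if "d \<in> D" for d
  proof
    assume e: "ET d t"
    have dV: "d \<in> VT" using that fD(2) by blast
    have "joined VT ET d d" by (rule joined_refl[OF dV])
    then have "joined VT ET d t" by (rule joined_step[of VT ET d d t, OF _ e t])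
    then show False using nj that by blast
  qed
  have inj: "inj_on (\<phi>(t := h)) (insert t D)"
  proof (rule inj_onI)
    fix x y assume x: "x \<in> insert t D" and y: "y \<in> insert t D" and e: "(\<phi>(t := h)) x = (\<phi>(t := h)) y"
    show "x = y"
    proof (cases "x = t")
      case True
      show ?thesis
      proof (rule ccontr)
        assume "x \<noteq> y"
        then have "y \<in> D" "y \<noteq> t" using y True by auto
        then have "h = \<phi> y" using e True by simp
        then show False using h(2) \<open>y \<in> D\<close> by blast
      qed
    next
      case False
      then have xD: "x \<in> D" using x by simp
      show ?thesis
      proof (cases "y = t")
        case True
        then have "\<phi> x = h" using e False by simp
        then show ?thesis using h(2) xD by blast
      next
        case F2: False
        then have "y \<in> D" using y by simp
        then show ?thesis using e False F2 fD(3) xD unfolding inj_on_def by simp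
      qed
    qed
  qed
  have edges: "\<forall>x\<in>insert t D. \<forall>y\<in>insert t D. ET x y \<longrightarrow> EH ((\<phi>(t := h)) x) ((\<phi>(t := h)) y)"
  proof (intro ballI impI)
    fix x y assume x: "x \<in> insert t D" and y: "y \<in> insert t D" and e: "ET x y"
    show "EH ((\<phi>(t := h)) x) ((\<phi>(t := h)) y)"
    proof (cases "x = t")
      case True
      then show ?thesis
      proof (cases "y = t")
        case True then show ?thesis using \<open>x = t\<close> e irrT by simp
      next
        case False then have "y \<in> D" using y by simp
        then show ?thesis using noedge[of y] symT[OF e] True by simp
      qed
    next
      case False
      then have xD: "x \<in> D" using x by simp
      show ?thesis
      proof (cases "y = t")
        case True then show ?thesis using noedge[OF xD] e by simp
      next
        case False then have "y \<in> D" using y by simp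
        then show ?thesis using eD xD e agree by simp
      qed
    qed
  qed
  have conn: "\<forall>x\<in>insert t D. \<forall>y\<in>insert t D. joined VT ET x y \<longrightarrow> joined (insert t D) (induced ET (insert t D)) x y"
  proof (intro ballI impI)
    fix x y assume x: "x \<in> insert t D" and y: "y \<in> insert t D" and j: "joined VT ET x y"
    show "joined (insert t D) (induced ET (insert t D)) x y"
    proof (cases "x = t")
      case True
      show ?thesis
      proof (cases "y = t")
        case True
        have "t \<in> insert t D" by simp
        then have "joined (insert t D) (induced ET (insert t D)) t t" by (rule joined_refl)
        then show ?thesis using \<open>x = t\<close> True by simp
      next
        case False
        then have "y \<in> D" using y by simp
        moreover have "joined VT ET y x" using joined_sym[of ET VT x y] symT j by blast
        then have "joined VT ET y t" using True by simp
        ultimately show ?thesis using nj by blast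
      qed
    next
      case False
      then have xD: "x \<in> D" using x by simp
      show ?thesis
      proof (cases "y = t")
        case True then show ?thesis using nj xD j by blast
      next
        case False then have "y \<in> D" using y by simp
        then have "joined D (induced ET D) x y" using cD xD j by blast
        moreover have "D \<subseteq> insert t D" by blast
        ultimately show ?thesis by (rule joined_mono_induced)
      qed
    qed
  qed
  have img: "(\<phi>(t := h)) ` insert t D \<subseteq> VH"
  proof
    fix z assume "z \<in> (\<phi>(t := h)) ` insert t D"
    then obtain x where x: "x \<in> insert t D" "z = (\<phi>(t := h)) x" by blast
    show "z \<in> VH"
    proof (cases "x = t")
      case True then show ?thesis using x h by simp
    next
      case False then have "x \<in> D" using x by simp
      then show ?thesis using x agree fD(4) by auto
    qed
  qed
  have "finite (insert t D)" using fD(1) by simp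
  moreover have "insert t D \<subseteq> VT" using fD(2) t by simp
  ultimately show ?thesis unfolding valid_def using inj img edges conn by blast
qed

lemma add_path:
  assumes v: "valid D \<phi>" and tp: "is_path VT ET ts" and l2: "2 \<le> length ts"
    and b: "hd ts \<in> D" and tD: "set (tl ts) \<inter> D = {}"
    and pp: "is_path VH EH ps" and lp: "length ps = length ts" and hp: "hd ps = \<phi> (hd ts)"
    and pD: "set (tl ps) \<inter> \<phi> ` D = {}"
  shows "\<exists>\<phi>'. valid (D \<union> set ts) \<phi>' \<and> (\<forall>x\<in>D. \<phi>' x = \<phi> x) \<and> (\<forall>i<length ts. \<phi>' (ts ! i) = ps ! i)"
proof -
  have fD: "finite D" "D \<subseteq> VT" "inj_on \<phi> D" "\<phi> ` D \<subseteq> VH"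
    and eD: "\<forall>x\<in>D. \<forall>y\<in>D. ET x y \<longrightarrow> EH (\<phi> x) (\<phi> y)"
    and cD: "\<forall>x\<in>D. \<forall>y\<in>D. joined VT ET x y \<longrightarrow> joined D (induced ET D) x y"
    using v unfolding valid_def by auto
  have tne: "ts \<noteq> []" and dts: "distinct ts" and tsV: "set ts \<subseteq> VT"
    and tE: "\<And>i. Suc i < length ts \<Longrightarrow> ET (ts ! i) (ts ! Suc i)"
    using tp unfolding is_path_def by auto
  have pne: "ps \<noteq> []" and dps: "distinct ps" and psV: "set ps \<subseteq> VH"
    and pE: "\<And>i. Suc i < length ps \<Longrightarrow> EH (ps ! i) (ps ! Suc i)"
    using pp unfolding is_path_def by auto
  define idx where "idx x = (THE i. i < length ts \<and> ts ! i = x)" for x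
  have idx: "idx (ts ! i) = i" if "i < length ts" for i
    unfolding idx_def
  proof (rule the_equality)
    show "i < length ts \<and> ts ! i = ts ! i" using that by simp
  next
    fix j assume "j < length ts \<and> ts ! j = ts ! i"
    then show "j = i" using nth_eq_iff_index_eq[OF dts, of j i] that by simp
  qed
  define \<phi>' where "\<phi>' x = (if x \<in> set (tl ts) then ps ! idx x else \<phi> x)" for x
  have hd0: "hd ts = ts ! 0" using tne by (simp add: hd_conv_nth)
  have hp0: "hd ps = ps ! 0" using pne by (simp add: hd_conv_nth)
  have hdnt: "hd ts \<notin> set (tl ts)" using hd_notin_tl[OF dts tne] .
  have phi_ts: "\<phi>' (ts ! i) = ps ! i" if "i < length ts" for i
  proof (cases "i = 0")
    case True
    have "\<phi>' (ts ! i) = \<phi>' (hd ts)" by (simp only: True hd0[symmetric])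
    also have "\<dots> = \<phi> (hd ts)" unfolding \<phi>'_def by (rule if_not_P[OF hdnt])
    also have "\<dots> = hd ps" by (rule hp[symmetric])
    also have "\<dots> = ps ! i" by (simp only: True hp0)
    finally show ?thesis .
  next
    case False
    then have "ts ! i \<in> set (tl ts)" using that in_tl_nth[of "ts ! i" ts] by auto
    then show ?thesis unfolding \<phi>'_def using idx[OF that] by simp
  qed
  have phi_D: "\<phi>' x = \<phi> x" if "x \<in> D" for x
    using that tD unfolding \<phi>'_def by auto
  have pstl: "ps ! i \<notin> \<phi> ` D" if "0 < i" "i < length ts" for i
  proof -
    have "ps ! i \<in> set (tl ps)" using that lp in_tl_nth[of "ps ! i" ps] by auto
    then show ?thesis using pD by blast
  qed
  have setts: "set ts = insert (hd ts) (set (tl ts))" using tne by (cases ts) auto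
  have D'eq: "D \<union> set ts = D \<union> set (tl ts)" using setts b by auto
  have tlc: "\<exists>i. 0 < i \<and> i < length ts \<and> x = ts ! i" if "x \<in> set (tl ts)" for x
    using that unfolding in_tl_nth .
  have inj: "inj_on \<phi>' (D \<union> set ts)"
    unfolding D'eq
  proof (rule inj_onI)
    fix x y assume x: "x \<in> D \<union> set (tl ts)" and y: "y \<in> D \<union> set (tl ts)" and e: "\<phi>' x = \<phi>' y"
    show "x = y"
    proof (cases "x \<in> D")
      case True
      show ?thesis
      proof (cases "y \<in> D")
        case True
        then show ?thesis using \<open>x \<in> D\<close> e phi_D fD(3) unfolding inj_on_def by simp
      next
        case False
        then obtain j where j: "0 < j" "j < length ts" "y = ts ! j" using y tlc by blast
        have "\<phi> x = ps ! j" using e phi_D[OF \<open>x \<in> D\<close>] phi_ts[OF j(2)] j(3) by simp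
        moreover have "\<phi> x \<in> \<phi> ` D" using \<open>x \<in> D\<close> by (rule imageI)
        ultimately have "ps ! j \<in> \<phi> ` D" by simp
        then show ?thesis using pstl[OF j(1,2)] by contradiction
      qed
    next
      case False
      then obtain i where i: "0 < i" "i < length ts" "x = ts ! i" using x tlc by blast
      show ?thesis
      proof (cases "y \<in> D")
        case True
        have "\<phi> y = ps ! i" using e phi_D[OF True] phi_ts[OF i(2)] i(3) by simp
        moreover have "\<phi> y \<in> \<phi> ` D" using True by (rule imageI)
        ultimately have "ps ! i \<in> \<phi> ` D" by simp
        then show ?thesis using pstl[OF i(1,2)] by contradiction
      next
        case False
        then obtain j where j: "0 < j" "j < length ts" "y = ts ! j" using y tlc by blast
        have "ps ! i = ps ! j" using e phi_ts[OF i(2)] phi_ts[OF j(2)] i(3) j(3) by simp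
        then have "i = j" using nth_eq_iff_index_eq[OF dps, of i j] i j lp by simp
        then show ?thesis using i j by simp
      qed
    qed
  qed
  have img: "\<phi>' ` (D \<union> set ts) \<subseteq> VH"
  proof
    fix z assume "z \<in> \<phi>' ` (D \<union> set ts)"
    then obtain x where x: "x \<in> D \<union> set (tl ts)" "z = \<phi>' x" unfolding D'eq by blast
    show "z \<in> VH"
    proof (cases "x \<in> D")
      case True then show ?thesis using x phi_D fD(4) by auto
    next
      case False
      then obtain i where i: "0 < i" "i < length ts" "x = ts ! i" using x tlc by blast
      then have "z = ps ! i" using x phi_ts by simp
      moreover have "ps ! i \<in> set ps" using i lp by simp
      ultimately show ?thesis using psV by blast
    qed
  qed
  have e01: "EH (ps ! 0) (ps ! 1)" using pE[of 0] l2 lp by simp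
  have edges: "\<forall>x\<in>D \<union> set ts. \<forall>y\<in>D \<union> set ts. ET x y \<longrightarrow> EH (\<phi>' x) (\<phi>' y)"
    unfolding D'eq
  proof (intro ballI impI)
    fix x y assume x: "x \<in> D \<union> set (tl ts)" and y: "y \<in> D \<union> set (tl ts)" and e: "ET x y"
    show "EH (\<phi>' x) (\<phi>' y)"
    proof (cases "x \<in> D")
      case True
      show ?thesis
      proof (cases "y \<in> D")
        case True
        then show ?thesis using \<open>x \<in> D\<close> e phi_D eD by simp
      next
        case False
        then obtain j where j: "0 < j" "j < length ts" "y = ts ! j" using y tlc by blast
        have "ET (ts ! j) x" using symT[OF e] j(3) by simp
        then have "j = 1 \<and> x = hd ts"
          using forest_attach[OF fT symT fD(2) cD tp b tD j(1,2) \<open>x \<in> D\<close>] by blast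
        then show ?thesis using phi_ts[OF j(2)] j(3) phi_ts[of 0] tne hd0 e01 by simp
      qed
    next
      case False
      then obtain i where i: "0 < i" "i < length ts" "x = ts ! i" using x tlc by blast
      show ?thesis
      proof (cases "y \<in> D")
        case True
        have "ET (ts ! i) y" using e i(3) by simp
        then have "i = 1 \<and> y = hd ts"
          using forest_attach[OF fT symT fD(2) cD tp b tD i(1,2) True] by blast
        then show ?thesis using phi_ts[OF i(2)] i(3) phi_ts[of 0] tne hd0 symH[OF e01] by simp
      next
        case False
        then obtain j where j: "0 < j" "j < length ts" "y = ts ! j" using y tlc by blast
        have eij: "ET (ts ! i) (ts ! j)" using e i(3) j(3) by simp
        have "i \<noteq> j" using eij irrT by auto
        consider (a) "j = Suc i" | (b) "i = Suc j" | (c) "Suc i < j" | (d) "Suc j < i"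
          using \<open>i \<noteq> j\<close> by linarith
        then show ?thesis
        proof cases
          case a
          then show ?thesis using pE[of i] phi_ts[OF i(2)] phi_ts[OF j(2)] i(3) j(3) j(2) lp by simp
        next
          case b
          then have "EH (ps ! j) (ps ! i)" using pE[of j] i(2) lp by simp
          then show ?thesis using symH phi_ts[OF i(2)] phi_ts[OF j(2)] i(3) j(3) by simp
        next
          case c
          then show ?thesis using forest_chord[OF fT symT tp c j(2) eij] by blast
        next
          case d
          have "ET (ts ! j) (ts ! i)" using symT[OF eij] .
          then show ?thesis using forest_chord[OF fT symT tp d i(2)] by blast
        qed
      qed
    qed
  qed
  have symI: "induced ET (D \<union> set ts) y x" if "induced ET (D \<union> set ts) x y" for x y
    using that symT[of x y] unfolding induced_def by blast
  have R: "joined (D \<union> set ts) (induced ET (D \<union> set ts)) (hd ts) z" if zin: "z \<in> set ts" for z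
  proof -
    obtain i where i: "i < length ts" "z = ts ! i" using zin unfolding in_set_conv_nth by blast
    have "set ts \<subseteq> D \<union> set ts" by blast
    then show ?thesis using joined_prefix[OF tp i(1)] i(2) by simp
  qed
  have RT: "joined VT ET (hd ts) z" if zin: "z \<in> set ts" for z
  proof -
    obtain i where i: "i < length ts" "z = ts ! i" using zin unfolding in_set_conv_nth by blast
    then show ?thesis using joined_prefix_V[OF tp i(1)] by simp
  qed
  have mono: "joined (D \<union> set ts) (induced ET (D \<union> set ts)) x y" if "joined D (induced ET D) x y" for x y
    using joined_mono_induced[OF that] by blast
  have conn: "\<forall>x\<in>D \<union> set ts. \<forall>y\<in>D \<union> set ts. joined VT ET x y \<longrightarrow> joined (D \<union> set ts) (induced ET (D \<union> set ts)) x y"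
  proof (intro ballI impI)
    fix x y assume x: "x \<in> D \<union> set ts" and y: "y \<in> D \<union> set ts" and j: "joined VT ET x y"
    show "joined (D \<union> set ts) (induced ET (D \<union> set ts)) x y"
    proof (cases "x \<in> set ts")
      case True
      have xh: "joined (D \<union> set ts) (induced ET (D \<union> set ts)) x (hd ts)"
        using joined_sym[of "induced ET (D \<union> set ts)", OF symI R[OF True]] .
      show ?thesis
      proof (cases "y \<in> set ts")
        case True
        then show ?thesis using joined_trans[OF xh R[OF True]] by blast
      next
        case False
        then have yD: "y \<in> D" using y by simp
        have "joined VT ET (hd ts) y" using joined_trans[OF RT[OF True] j] .
        then have "joined D (induced ET D) (hd ts) y" using cD b yD by blast
        then show ?thesis using joined_trans[OF xh mono] by blast
      qed
    next
      case False
      then have xD: "x \<in> D" using x by simp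
      show ?thesis
      proof (cases "y \<in> set ts")
        case True
        have "joined VT ET y (hd ts)"
          using joined_sym[of ET VT, OF symT RT[OF True]] .
        then have "joined VT ET x (hd ts)" using joined_trans[OF j] by blast
        then have "joined D (induced ET D) x (hd ts)" using cD b xD by blast
        then show ?thesis using joined_trans[OF mono R[OF True]] by blast
      next
        case False
        then have yD: "y \<in> D" using y by simp
        then show ?thesis using cD xD j mono by blast
      qed
    qed
  qed
  have "valid (D \<union> set ts) \<phi>'"
    unfolding valid_def using fD(1,2) tsV inj img edges conn by simp
  then show ?thesis using phi_D phi_ts by blast
qed

end

lemma last_D_index:
  assumes ne: "xs \<noteq> []" and h: "hd xs \<in> D"
  shows "\<exists>i<length xs. xs ! i \<in> D \<and> set (drop (Suc i) xs) \<inter> D = {}"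
proof -
  define I where "I = {i. i < length xs \<and> xs ! i \<in> D}"
  have fI: "finite I" unfolding I_def by simp
  have "0 \<in> I" unfolding I_def using ne h by (simp add: hd_conv_nth)
  then have neI: "I \<noteq> {}" by blast
  define i where "i = Max I"
  have iI: "i \<in> I" unfolding i_def using fI neI by (rule Max_in)
  have mx: "j \<le> i" if "j \<in> I" for j unfolding i_def using fI that by (rule Max_ge)
  have "set (drop (Suc i) xs) \<inter> D = {}"
  proof (rule ccontr)
    assume "set (drop (Suc i) xs) \<inter> D \<noteq> {}"
    then obtain z where z: "z \<in> set (drop (Suc i) xs)" "z \<in> D" by blast
    then obtain k where k: "k < length (drop (Suc i) xs)" "drop (Suc i) xs ! k = z"
      unfolding in_set_conv_nth by blast
    have "Suc i + k < length xs" using k(1) by simp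
    moreover have "xs ! (Suc i + k) = z" using k by simp
    ultimately have "Suc i + k \<in> I" unfolding I_def using z(2) by simp
    then show False using mx by fastforce
  qed
  then show ?thesis using iI unfolding I_def by blast
qed

lemma comp_eq:
  assumes sym: "\<And>x y. E x y \<Longrightarrow> E y x" and j: "joined V E d c"
  shows "component V E c = component V E d"
proof -
  have jc: "joined V E c d" using joined_sym[of E V, OF sym j] .
  show ?thesis unfolding component_def
  proof (intro Collect_cong conj_cong refl iffI)
    fix w assume "joined V E c w" then show "joined V E d w" using joined_trans[OF j] by blast
  next
    fix w assume "joined V E d w" then show "joined V E c w" using joined_trans[OF jc] by blast
  qed
qed

context setting begin

lemma tl_avoid:
  assumes ps: "is_path VH EH ps" and h: "hd ps = a" and F: "set ps \<inter> (\<phi> ` D - {a}) = {}"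
  shows "set (tl ps) \<inter> \<phi> ` D = {}"
proof -
  have ne: "ps \<noteq> []" and d: "distinct ps" using ps unfolding is_path_def by auto
  have "a \<notin> set (tl ps)" using hd_notin_tl[OF d ne] h by simp
  moreover have "set (tl ps) \<subseteq> set ps" by (rule list.set_sel(2)[OF ne, THEN subsetI]) 
  ultimately show ?thesis using F by blast
qed

lemma forth:
  assumes v: "valid D \<phi>" and t: "t \<in> VT"
  shows "\<exists>D' \<phi>'. valid D' \<phi>' \<and> D \<subseteq> D' \<and> (\<forall>x\<in>D. \<phi>' x = \<phi> x) \<and> t \<in> D'"
proof -
  have fD: "finite D" "D \<subseteq> VT" "\<phi> ` D \<subseteq> VH" using v unfolding valid_def by auto
  show ?thesis
  proof (cases "t \<in> D")
    case True then show ?thesis using v by blast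
  next
    case tD: False
    show ?thesis
    proof (cases "\<forall>d\<in>D. \<not> joined VT ET d t")
      case True
      obtain h where h: "h \<in> VH" "h \<notin> \<phi> ` D" using obtain_fresh[OF iH, of "\<phi> ` D"] fD(1) by blast
      have "valid (insert t D) (\<phi>(t := h))" using add_isolated[OF v t True h] .
      moreover have "\<forall>x\<in>D. (\<phi>(t := h)) x = \<phi> x" using tD by auto
      ultimately show ?thesis by blast
    next
      case False
      then obtain d where d: "d \<in> D" "joined VT ET d t" by blast
      then obtain xs where xs: "is_path VT ET xs" "hd xs = d" "last xs = t" unfolding joined_def by blast
      have xne: "xs \<noteq> []" using xs(1) unfolding is_path_def by simp
      obtain i where i: "i < length xs" "xs ! i \<in> D" "set (drop (Suc i) xs) \<inter> D = {}"
        using last_D_index[OF xne] xs(2) d(1) by blast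
      define ts where "ts = drop i xs"
      have tp: "is_path VT ET ts" unfolding ts_def using is_path_drop[OF xs(1) i(1)] .
      have hts: "hd ts = xs ! i" unfolding ts_def using i(1) by (simp add: hd_drop_conv_nth)
      have tlts: "tl ts = drop (Suc i) xs" unfolding ts_def by (simp add: drop_Suc tl_drop)
      have lts: "last ts = t" unfolding ts_def using xs(3) i(1) by simp
      have l2: "2 \<le> length ts"
      proof (rule ccontr)
        assume "\<not> 2 \<le> length ts"
        then have "length xs - i \<le> 1" unfolding ts_def by simp
        then have "i = length xs - 1" using i(1) by simp
        then have "xs ! i = last xs" using xne by (simp add: last_conv_nth)
        then show False using i(2) xs(3) tD by simp
      qed
      define F where "F = \<phi> ` D - {\<phi> (hd ts)}"
      have aV: "\<phi> (hd ts) \<in> VH" using fD(3) hts i(2) by auto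
      have fF: "finite F" unfolding F_def using fD(1) by simp
      obtain ps where ps: "is_path VH EH ps" "hd ps = \<phi> (hd ts)" "length ps = Suc (length ts - 1)"
        "set ps \<inter> F = {}"
        using H_long[OF fF aV, of "length ts - 1"] unfolding F_def by blast
      have lp: "length ps = length ts" using ps(3) l2 by simp
      have pD: "set (tl ps) \<inter> \<phi> ` D = {}" using tl_avoid[OF ps(1) ps(2)] ps(4) unfolding F_def by blast
      obtain \<phi>' where \<phi>': "valid (D \<union> set ts) \<phi>'" "\<forall>x\<in>D. \<phi>' x = \<phi> x"
        using add_path[OF v tp l2 _ _ ps(1) lp ps(2) pD] hts i(2,3) tlts by auto
      have "t \<in> set ts" using lts l2 by (metis last_in_set list.size(3) not_numeral_le_zero)
      then show ?thesis using \<phi>' by blast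
    qed
  qed
qed

lemma back_ii:
  assumes inf: "infinite (components VT ET)" and v: "valid D \<phi>" and h: "h \<in> VH" "h \<notin> \<phi> ` D"
  shows "\<exists>D' \<phi>'. valid D' \<phi>' \<and> D \<subseteq> D' \<and> (\<forall>x\<in>D. \<phi>' x = \<phi> x) \<and> h \<in> \<phi>' ` D'"
proof -
  have fD: "finite D" using v unfolding valid_def by auto
  have "\<exists>c\<in>VT. \<forall>d\<in>D. \<not> joined VT ET d c"
  proof (rule ccontr)
    assume "\<not> ?thesis"
    then have all: "\<forall>c\<in>VT. \<exists>d\<in>D. joined VT ET d c" by blast
    have "components VT ET \<subseteq> component VT ET ` D"
    proof
      fix C assume "C \<in> components VT ET"
      then obtain c where c: "c \<in> VT" "C = component VT ET c" unfolding components_def by blast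
      then obtain d where d: "d \<in> D" "joined VT ET d c" using all by blast
      have "C = component VT ET d" using c(2) comp_eq[of ET, OF symT d(2)] by simp
      then show "C \<in> component VT ET ` D" using d(1) by blast
    qed
    then have "finite (components VT ET)" using fD by (meson finite_imageI finite_subset)
    then show False using inf by simp
  qed
  then obtain c where c: "c \<in> VT" "\<forall>d\<in>D. \<not> joined VT ET d c" by blast
  have cD: "c \<notin> D"
  proof
    assume "c \<in> D"
    moreover have "joined VT ET c c" using c(1) by (rule joined_refl)
    ultimately show False using c(2) by blast
  qed
  have "valid (insert c D) (\<phi>(c := h))" using add_isolated[OF v c(1) c(2) h] .
  moreover have "\<forall>x\<in>D. (\<phi>(c := h)) x = \<phi> x" using cD by auto
  moreover have "h \<in> (\<phi>(c := h)) ` insert c D" by simp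
  ultimately show ?thesis by blast
qed

lemma path_in_comp:
  assumes p: "is_path VT ET zs" and u: "hd zs = u" and uC: "joined VT ET c u"
  shows "set zs \<subseteq> component VT ET c"
proof
  fix z assume "z \<in> set zs"
  then obtain k where k: "k < length zs" "z = zs ! k" unfolding in_set_conv_nth by blast
  have "joined VT ET u z" using joined_prefix_V[OF p k(1)] u k(2) by simp
  then have "joined VT ET c z" using joined_trans[OF uC] by blast
  then show "z \<in> component VT ET c" unfolding component_def using joined_in[of VT ET c z] by blast
qed

lemma back_i:
  assumes C: "C \<in> components VT ET" and ub: "unbounded_radius C (induced ET C)"
    and v: "valid D \<phi>" and h: "h \<in> VH" "h \<notin> \<phi> ` D"
  shows "\<exists>D' \<phi>'. valid D' \<phi>' \<and> D \<subseteq> D' \<and> (\<forall>x\<in>D. \<phi>' x = \<phi> x) \<and> h \<in> \<phi>' ` D'"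
proof -
  have fD: "finite D" "D \<subseteq> VT" "\<phi> ` D \<subseteq> VH"
    and cD: "\<forall>x\<in>D. \<forall>y\<in>D. joined VT ET x y \<longrightarrow> joined D (induced ET D) x y"
    using v unfolding valid_def by auto
  obtain c where c: "c \<in> VT" "C = component VT ET c" using C unfolding components_def by blast
  show ?thesis
  proof (cases "\<forall>d\<in>D. \<not> joined VT ET d c")
    case True
    have cnD: "c \<notin> D"
    proof
      assume "c \<in> D"
      moreover have "joined VT ET c c" using c(1) by (rule joined_refl)
      ultimately show False using True by blast
    qed
    have "valid (insert c D) (\<phi>(c := h))" using add_isolated[OF v c(1) True h] .
    moreover have "\<forall>x\<in>D. (\<phi>(c := h)) x = \<phi> x" using cnD by auto
    moreover have "h \<in> (\<phi>(c := h)) ` insert c D" by simp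
    ultimately show ?thesis by blast
  next
    case False
    then obtain u where u: "u \<in> D" "joined VT ET u c" by blast
    have cu: "joined VT ET c u" using joined_sym[of ET VT, OF symT u(2)] .
    have uC: "u \<in> C" unfolding c(2) component_def using cu joined_in[OF cu] by blast
    have Hp: "\<forall>b\<in>D. \<exists>ps. is_path VH EH ps \<and> hd ps = \<phi> b \<and> last ps = h \<and> set ps \<inter> (\<phi> ` D - {\<phi> b}) = {}"
    proof
      fix b assume b: "b \<in> D"
      have "\<phi> b \<in> VH" using b fD(3) by blast
      moreover have "finite (\<phi> ` D - {\<phi> b})" using fD(1) by simp
      ultimately show "\<exists>ps. is_path VH EH ps \<and> hd ps = \<phi> b \<and> last ps = h \<and> set ps \<inter> (\<phi> ` D - {\<phi> b}) = {}"
        using H_path[of "\<phi> ` D - {\<phi> b}" "\<phi> b" h] h by blast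
    qed
    from bchoice[OF Hp] obtain pf where pf: "\<forall>b\<in>D. is_path VH EH (pf b) \<and> hd (pf b) = \<phi> b \<and> last (pf b) = h
        \<and> set (pf b) \<inter> (\<phi> ` D - {\<phi> b}) = {}" by blast
    define Lm where "Lm = sum (\<lambda>b. length (pf b)) D"
    define K where "K = card D + Lm"
    have "\<not> radius_le C (induced ET C) K" using ub unfolding unbounded_radius_def by blast
    then obtain w where w: "w \<in> C" and nw: "\<And>xs. is_path C (induced ET C) xs \<Longrightarrow> hd xs = u \<Longrightarrow> last xs = w \<Longrightarrow> \<not> length xs - 1 \<le> K"
      unfolding radius_le_def using uC by blast
    have cw: "joined VT ET c w" using w unfolding c(2) component_def by blast
    have uw: "joined VT ET u w" using joined_trans[OF u(2) cw] .
    then obtain xs where xs: "is_path VT ET xs" "hd xs = u" "last xs = w" unfolding joined_def by blast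
    have xne: "xs \<noteq> []" using xs(1) unfolding is_path_def by simp
    have xE: "\<And>k. Suc k < length xs \<Longrightarrow> ET (xs ! k) (xs ! Suc k)" using xs(1) unfolding is_path_def by blast
    obtain i where i: "i < length xs" "xs ! i \<in> D" "set (drop (Suc i) xs) \<inter> D = {}"
      using last_D_index[OF xne] xs(2) u(1) by blast
    define b where "b = xs ! i"
    have bD: "b \<in> D" using i(2) unfolding b_def .
    have "joined VT ET u b" using joined_prefix_V[OF xs(1) i(1)] xs(2) unfolding b_def by simp
    then have "joined D (induced ET D) u b" using cD u(1) bD by blast
    then obtain P where P: "is_path D (induced ET D) P" "hd P = u" "last P = b" unfolding joined_def by blast
    have PP: "is_path UNIV ET P \<and> set P \<subseteq> D" using P(1) unfolding is_path_induced_iff .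
    have Pp: "is_path VT ET P" using PP fD(2) unfolding is_path_def by blast
    have Pne: "P \<noteq> []" and dP: "distinct P" using Pp unfolding is_path_def by auto
    have lP: "length P \<le> card D"
    proof -
      have "length P = card (set P)" using distinct_card[OF dP] by simp
      also have "\<dots> \<le> card D" using PP fD(1) by (simp add: card_mono)
      finally show ?thesis .
    qed
    define tys where "tys = drop (Suc i) xs"
    have tysD: "set tys \<inter> D = {}" using i(3) unfolding tys_def .
    define zs where "zs = P @ tys"
    have zp: "is_path VT ET zs"
    proof -
      have sP: "successively ET P" and sPV: "set P \<subseteq> VT" using Pp unfolding is_path_conv by auto
      have st: "successively ET tys \<and> distinct tys \<and> set tys \<subseteq> VT"
      proof (cases "Suc i < length xs")
        case True
        then have "is_path VT ET tys" unfolding tys_def using is_path_drop[OF xs(1)] by blast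
        then show ?thesis unfolding is_path_conv by simp
      next
        case False
        then have "tys = []" unfolding tys_def by simp
        then show ?thesis by simp
      qed
      have con: "ET (last P) (hd tys)" if "tys \<noteq> []"
      proof -
        have "Suc i < length xs" using that unfolding tys_def by simp
        then have "hd tys = xs ! Suc i" unfolding tys_def by (simp add: hd_drop_conv_nth)
        then show ?thesis using P(3) xE[OF \<open>Suc i < length xs\<close>] unfolding b_def by simp
      qed
      have "successively ET zs" unfolding zs_def using sP st con by (auto simp: successively_append_iff)
      moreover have "distinct zs" unfolding zs_def using dP st tysD PP by auto
      moreover have "set zs \<subseteq> VT" unfolding zs_def using sPV st by auto
      moreover have "zs \<noteq> []" unfolding zs_def using Pne by simp
      ultimately show ?thesis unfolding is_path_conv by simp
    qed
    have hz: "hd zs = u" unfolding zs_def using Pne P(2) by simp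
    have lz: "last zs = w"
    proof (cases "tys = []")
      case True
      then have "length xs \<le> Suc i" unfolding tys_def by simp
      then have "i = length xs - 1" using i(1) by simp
      then have "b = last xs" unfolding b_def using xne by (simp add: last_conv_nth)
      then show ?thesis unfolding zs_def using True P(3) xs(3) by simp
    next
      case False
      have "last tys = last xs" unfolding tys_def using False unfolding tys_def by simp
      then show ?thesis unfolding zs_def using False xs(3) by simp
    qed
    have zC: "set zs \<subseteq> C" unfolding c(2) using path_in_comp[OF zp hz cu] .
    have "is_path C (induced ET C) zs" unfolding is_path_induced_iff using is_path_sub[OF zp] zC by simp
    then have "\<not> length zs - 1 \<le> K" using nw hz lz by blast
    then have ltys: "Lm + 1 < length tys" using lP unfolding zs_def K_def by simp
    define L where "L = length (pf b)"
    have pfb: "is_path VH EH (pf b)" "hd (pf b) = \<phi> b" "last (pf b) = h" "set (pf b) \<inter> (\<phi> ` D - {\<phi> b}) = {}"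
      using pf bD by auto
    have LLm: "L \<le> Lm" unfolding L_def Lm_def using member_le_sum[of b D "\<lambda>b. length (pf b)"] bD fD(1) by simp
    have L2: "2 \<le> L"
    proof (rule ccontr)
      assume n2: "\<not> 2 \<le> L"
      have "pf b \<noteq> []" using pfb(1) unfolding is_path_def by simp
      then have "0 < length (pf b)" by simp
      with n2 have "length (pf b) = 1" unfolding L_def by linarith
      then have "hd (pf b) = last (pf b)" by (cases "pf b") auto
      then have "h = \<phi> b" using pfb by simp
      then show False using h(2) bD by blast
    qed
    define ys where "ys = drop i xs"
    have yp: "is_path VT ET ys" unfolding ys_def using is_path_drop[OF xs(1) i(1)] .
    have lys: "length ys = Suc (length tys)" unfolding ys_def tys_def using i(1) by simp
    have tlys: "tl ys = tys" unfolding ys_def tys_def by (simp add: drop_Suc tl_drop)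
    define ts where "ts = take L ys"
    have tp: "is_path VT ET ts" unfolding ts_def using is_path_take[OF yp] L2 by simp
    have lts: "length ts = L" unfolding ts_def using lys ltys LLm by simp
    have l2: "2 \<le> length ts" using lts L2 by simp
    have hts: "hd ts = b" unfolding ts_def ys_def b_def using L2 i(1) by (simp add: hd_drop_conv_nth)
    have ttD: "set (tl ts) \<inter> D = {}"
    proof -
      have "tl ts = take (L - 1) (tl ys)" unfolding ts_def by (simp add: tl_take)
      then have "set (tl ts) \<subseteq> set tys" using tlys by (metis set_take_subset)
      then show ?thesis using tysD by blast
    qed
    have pD: "set (tl (pf b)) \<inter> \<phi> ` D = {}" using tl_avoid[OF pfb(1) pfb(2)] pfb(4) by blast
    have lpf: "length (pf b) = length ts" using lts unfolding L_def by simp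
    obtain \<phi>' where \<phi>': "valid (D \<union> set ts) \<phi>'" "\<forall>x\<in>D. \<phi>' x = \<phi> x" "\<forall>k<length ts. \<phi>' (ts ! k) = pf b ! k"
      using add_path[OF v tp l2 _ ttD pfb(1) lpf] hts bD pfb(2) pD by auto
    have "\<phi>' (ts ! (L - 1)) = pf b ! (L - 1)" using \<phi>'(3) lts L2 by simp
    also have "\<dots> = h" using pfb(3) L2 unfolding L_def by (metis last_conv_nth list.size(3) not_numeral_le_zero)
    finally have "h \<in> \<phi>' ` (D \<union> set ts)" using lts L2 by (metis UnI2 diff_less image_eqI nth_mem zero_less_numeral less_le_trans zero_less_one)
    then show ?thesis using \<phi>' by blast
  qed
qed

end

context setting begin

lemma step:
  assumes cs: "(\<exists>C\<in>components VT ET. unbounded_radius C (induced ET C)) \<or> infinite (components VT ET)"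
    and v: "valid D \<phi>" and t: "t \<in> VT"
  shows "\<exists>D' \<phi>'. valid D' \<phi>' \<and> D \<subseteq> D' \<and> (\<forall>x\<in>D. \<phi>' x = \<phi> x) \<and> t \<in> D' \<and> (n \<in> VH \<longrightarrow> n \<in> \<phi>' ` D')"
proof -
  obtain D1 \<phi>1 where 1: "valid D1 \<phi>1" "D \<subseteq> D1" "\<forall>x\<in>D. \<phi>1 x = \<phi> x" "t \<in> D1"
    using forth[OF v t] by blast
  show ?thesis
  proof (cases "n \<in> VH \<and> n \<notin> \<phi>1 ` D1")
    case False
    then show ?thesis using 1 by blast
  next
    case True
    have "\<exists>D' \<phi>'. valid D' \<phi>' \<and> D1 \<subseteq> D' \<and> (\<forall>x\<in>D1. \<phi>' x = \<phi>1 x) \<and> n \<in> \<phi>' ` D'"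
    proof (cases "infinite (components VT ET)")
      case True
      then show ?thesis using back_ii[OF True 1(1)] \<open>n \<in> VH \<and> n \<notin> \<phi>1 ` D1\<close> by blast
    next
      case False
      then obtain C where C: "C \<in> components VT ET" "unbounded_radius C (induced ET C)" using cs by blast
      show ?thesis using back_i[OF C 1(1)] True by blast
    qed
    then obtain D2 \<phi>2 where 2: "valid D2 \<phi>2" "D1 \<subseteq> D2" "\<forall>x\<in>D1. \<phi>2 x = \<phi>1 x" "n \<in> \<phi>2 ` D2"
      by blast
    have "D \<subseteq> D2" using 1(2) 2(2) by blast
    moreover have "\<forall>x\<in>D. \<phi>2 x = \<phi> x" using 1(2,3) 2(3) by auto
    moreover have "t \<in> D2" using 1(4) 2(2) by blast
    ultimately show ?thesis using 2(1,4) by blast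
  qed
qed

lemma back_forth:
  assumes cs: "(\<exists>C\<in>components VT ET. unbounded_radius C (induced ET C)) \<or> infinite (components VT ET)"
    and cnt: "countable VT" and inf: "infinite VT"
  shows "has_spanning_copy VH EH VT ET"
proof -
  have VTne: "VT \<noteq> {}" using inf by auto
  define e where "e = from_nat_into VT"
  have eV: "e n \<in> VT" for n unfolding e_def using VTne by (rule from_nat_into)
  have esurj: "\<exists>n. e n = x" if "x \<in> VT" for x unfolding e_def using from_nat_into_surj[OF cnt that] .
  define Q where "Q n p q \<longleftrightarrow> valid (fst q) (snd q) \<and> fst p \<subseteq> fst q \<and> (\<forall>x\<in>fst p. snd q x = snd p x)
      \<and> e n \<in> fst q \<and> (n \<in> VH \<longrightarrow> n \<in> snd q ` fst q)" for n and p q :: "'a set \<times> ('a \<Rightarrow> nat)"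
  define nxt where "nxt n p = (SOME q. Q n p q)" for n p
  define S where "S = rec_nat ({}, \<lambda>_. 0) nxt"
  have S0: "S 0 = ({}, \<lambda>_. 0)" unfolding S_def by simp
  have SS: "S (Suc n) = nxt n (S n)" for n unfolding S_def by simp
  have ex: "\<exists>q. Q n p q" if vp: "valid (fst p) (snd p)" for n p
  proof -
    obtain D' \<phi>' where "valid D' \<phi>'" "fst p \<subseteq> D'" "\<forall>x\<in>fst p. \<phi>' x = snd p x" "e n \<in> D'"
      "n \<in> VH \<longrightarrow> n \<in> \<phi>' ` D'"
      using step[OF cs vp eV, of n] by blast
    then have "Q n p (D', \<phi>')" unfolding Q_def by simp
    then show ?thesis by blast
  qed
  have v0: "valid {} (\<lambda>_. 0)" unfolding valid_def by simp
  have allv: "valid (fst (S n)) (snd (S n)) \<and> Q n (S n) (S (Suc n))" for n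
  proof (induction n)
    case 0
    have "Q 0 (S 0) (S (Suc 0))" unfolding SS nxt_def using ex[of "S 0" 0] v0 S0 by (simp add: someI_ex)
    then show ?case using v0 S0 by simp
  next
    case (Suc n)
    then have vS: "valid (fst (S (Suc n))) (snd (S (Suc n)))" unfolding Q_def by simp
    have "Q (Suc n) (S (Suc n)) (S (Suc (Suc n)))" unfolding SS[of "Suc n"] nxt_def
      using ex[OF vS, of "Suc n"] by (rule someI_ex)
    then show ?case using vS by simp
  qed
  define Dn where "Dn n = fst (S n)" for n
  define fn where "fn n = snd (S n)" for n
  have vn: "valid (Dn n) (fn n)" for n using allv unfolding Dn_def fn_def by simp
  have qn: "Dn n \<subseteq> Dn (Suc n)" "\<forall>x\<in>Dn n. fn (Suc n) x = fn n x" "e n \<in> Dn (Suc n)"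
    "n \<in> VH \<Longrightarrow> n \<in> fn (Suc n) ` Dn (Suc n)" for n
    using allv[of n] unfolding Q_def Dn_def fn_def by auto
  have mono: "Dn m \<subseteq> Dn (m + k) \<and> (\<forall>x\<in>Dn m. fn (m + k) x = fn m x)" for m k
  proof (induction k)
    case 0 then show ?case by simp
  next
    case (Suc k)
    then show ?case using qn(1,2)[of "m + k"] by auto
  qed
  have monoM: "Dn m \<subseteq> Dn (max m k) \<and> (\<forall>x\<in>Dn m. fn (max m k) x = fn m x)" for m k
  proof -
    have "max m k = m + (max m k - m)" by simp
    then show ?thesis using mono[of m "max m k - m"] by metis
  qed
  have inD: "\<exists>n. x \<in> Dn n" if xV: "x \<in> VT" for x
  proof -
    obtain n where "e n = x" using esurj[OF xV] by blast
    then show ?thesis using qn(3)[of n] by blast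
  qed
  have DV: "Dn n \<subseteq> VT" for n using vn[of n] unfolding valid_def by simp
  define idx where "idx x = (SOME n. x \<in> Dn n)" for x
  define g where "g x = fn (idx x) x" for x
  have gk: "g x = fn m x" if "x \<in> Dn m" for x m
  proof -
    have "x \<in> VT" using that DV by blast
    then have k: "x \<in> Dn (idx x)" unfolding idx_def using inD by (metis someI_ex)
    have "fn (max m (idx x)) x = fn m x" using monoM[of m "idx x"] that by blast
    moreover have "fn (max m (idx x)) x = fn (idx x) x" using monoM[of "idx x" m] k by (simp add: max.commute)
    ultimately show ?thesis unfolding g_def by simp
  qed
  have both: "\<exists>M. x \<in> Dn M \<and> y \<in> Dn M" if xy: "x \<in> VT" "y \<in> VT" for x y
  proof -
    obtain m k where "x \<in> Dn m" "y \<in> Dn k" using inD xy by blast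
    then show ?thesis using monoM[of m k] monoM[of k m] by (metis max.commute subsetD)
  qed
  have inj: "inj_on g VT"
  proof (rule inj_onI)
    fix x y assume x: "x \<in> VT" and y: "y \<in> VT" and e: "g x = g y"
    obtain M where M: "x \<in> Dn M" "y \<in> Dn M" using both[OF x y] by blast
    have "fn M x = fn M y" using e gk[OF M(1)] gk[OF M(2)] by simp
    moreover have "inj_on (fn M) (Dn M)" using vn[of M] unfolding valid_def by simp
    ultimately show "x = y" using M unfolding inj_on_def by blast
  qed
  have img: "g ` VT = VH"
  proof
    show "g ` VT \<subseteq> VH"
    proof
      fix z assume "z \<in> g ` VT"
      then obtain x where x: "x \<in> VT" "z = g x" by blast
      obtain m where m: "x \<in> Dn m" using inD[OF x(1)] by blast
      have "fn m ` Dn m \<subseteq> VH" using vn[of m] unfolding valid_def by simp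
      then show "z \<in> VH" using x(2) gk[OF m] m by blast
    qed
  next
    show "VH \<subseteq> g ` VT"
    proof
      fix h assume h: "h \<in> VH"
      then obtain x where x: "x \<in> Dn (Suc h)" "h = fn (Suc h) x" using qn(4)[of h] by blast
      then have "g x = h" using gk[OF x(1)] by simp
      moreover have "x \<in> VT" using x(1) DV by blast
      ultimately show "h \<in> g ` VT" by blast
    qed
  qed
  have edges: "\<forall>x\<in>VT. \<forall>y\<in>VT. ET x y \<longrightarrow> EH (g x) (g y)"
  proof (intro ballI impI)
    fix x y assume x: "x \<in> VT" and y: "y \<in> VT" and e: "ET x y"
    obtain M where M: "x \<in> Dn M" "y \<in> Dn M" using both[OF x y] by blast
    have "EH (fn M x) (fn M y)" using vn[of M] M e unfolding valid_def by blast
    then show "EH (g x) (g y)" using gk[OF M(1)] gk[OF M(2)] by simp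
  qed
  show ?thesis unfolding has_spanning_copy_def bij_betw_def using inj img edges by blast
qed

end

theorem mainTheorem12:
  fixes VT :: "'a set" and ET :: "'a \<Rightarrow> 'a \<Rightarrow> bool"
  assumes "graph VT ET" and "countable VT" and "infinite VT"
  shows "(\<forall>(VH :: nat set) EH. graph VH EH \<and> infinite VH \<and> infinitely_connected VH EH
            \<longrightarrow> has_spanning_copy VH EH VT ET)
     \<longleftrightarrow> forest VT ET \<and>
         ((\<exists>C\<in>components VT ET. unbounded_radius C (induced ET C))
          \<or> infinite (components VT ET))"
proof
  assume all: "\<forall>(VH :: nat set) EH. graph VH EH \<and> infinite VH \<and> infinitely_connected VH EH
            \<longrightarrow> has_spanning_copy VH EH VT ET"
  show "forest VT ET \<and>
         ((\<exists>C\<in>components VT ET. unbounded_radius C (induced ET C))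
          \<or> infinite (components VT ET))"
    using forward_forest[OF all] forward_radius[OF all] by blast
next
  assume r: "forest VT ET \<and>
         ((\<exists>C\<in>components VT ET. unbounded_radius C (induced ET C))
          \<or> infinite (components VT ET))"
  show "\<forall>(VH :: nat set) EH. graph VH EH \<and> infinite VH \<and> infinitely_connected VH EH
            \<longrightarrow> has_spanning_copy VH EH VT ET"
  proof (intro allI impI)
    fix VH :: "nat set" and EH :: "nat \<Rightarrow> nat \<Rightarrow> bool"
    assume h: "graph VH EH \<and> infinite VH \<and> infinitely_connected VH EH"
    interpret S: setting VT ET VH EH
      using assms(1) r h by unfold_locales auto
    show "has_spanning_copy VH EH VT ET"
      using S.back_forth r assms(2,3) by blast
  qed
qed

end
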